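(* Let $\mathcal L$ be a finite relational language, let $E\notin\mathcal L$ be the binary predicate symbol of $T_{\mathrm{Graph}}$, let $J\colon T_{\mathcal L}\leadsto T_{\mathrm{Graph}}\cup T_{\mathcal L}$ be the structure-erasing interpretation (so $J(M)$ is the $\mathcal L$-reduct of $M$), let $\mathcal F$ be a family of models of $T_{\mathrm{Graph}}\cup T_{\mathcal L}$, and let $I\colon T_{\mathrm{Graph}}\leadsto\mathrm{Forb}_{T_{\mathrm{Graph}}\cup T_{\mathcal L}}(\mathcal F\!\uparrow^E)$ act identically on $E$. Then $$\chi(I)=\inf\{\ell\in\mathbb{N}_+:\mathcal P_{\ell,\mathcal L}\subseteq\chi^E_\ell(\mathcal F)\}$$ (with $\inf\varnothing=\infty$). Furthermore, $\chi(I)<\infty$ if and only if $\mathcal P_{1,\mathcal L}\subseteq\mathcal U_1(J(\mathcal F))$, where $J(\mathcal F)=\{J(F):F\in\mathcal F\}$.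
   Context: Structures are finite and canonical (no predicate holds on a tuple with a repeated entry); $V(M)$ is the vertex set, $(V)_k$ the set of injective maps $[k]\to V$, $R_P(M)\subseteq(V(M))_{k(P)}$ the tuples satisfying $P$. $T_{\mathcal L}$: all canonical $\mathcal L$-structures; $T_{\mathrm{Graph}}$: simple graphs over $\{E\}$; models of $T_{\mathrm{Graph}}\cup T_{\mathcal L}$ are graphs with an arbitrary canonical $\mathcal L$-structure on the same vertex set. $\mathcal F\!\uparrow^E$: all models $F'$ of $T_{\mathrm{Graph}}\cup T_{\mathcal L}$ such that for some $F\in\mathcal F$, $V(F')=V(F)$, $R_E(F')\supseteq R_E(F)$, $R_P(F')=R_P(F)$ for $P\in\mathcal L$. $\mathrm{Forb}_T(\mathcal G)$: models of $T$ with no induced substructure isomorphic to a member of $\mathcal G$. $I$ acts identically on $E$, so $I(M)$ is the graph part of $M$. $\chi(I)=\sup(\{\ell\in\mathbb{N}_+:\forall n\ \exists N\in\mathcal M_n[T],\ T_{n,\ell}\subseteq I(N)\}\cup\{0\})+1$, with $\mathcal M_n[T]$ the $n$-vertex models up to isomorphism, $T_{n,\ell}$ the balanced complete $\ell$-partite graph on $n$ vertices, and $G\subseteq H$ meaning an injection mapping edges to edges. An $\ell$-split order over $V$ is $(f,\preceq)$ with $f\colon V\to[\ell]$ and $\preceq$ a reflexive partial order such that $v,w$ are comparable iff $f(v)=f(w)$; $\mathcal S_{\ell,V}$ is the set of these, $\mathcal S_{\ell,k}=\mathcal S_{\ell,[k]}$. For an injection $g$, $w_1\preceq_g w_2\iff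 g(w_1)\preceq g(w_2)$. An $\ell$-Ramsey pattern on $\mathcal L$ is $Q\colon P\mapsto Q_P\subseteq\mathcal S_{\ell,k(P)}$ ($P\in\mathcal L$); $\mathcal P_{\ell,\mathcal L}$ is the set of these. An $\mathcal L$-structure $K$ is $Q$-uniform w.r.t. $(f,\preceq)\in\mathcal S_{\ell,V(K)}$ if $R_P(K)=\{\alpha\in(V(K))_{k(P)}:(f\circ\alpha,\preceq_\alpha)\in Q_P\}$ for all $P\in\mathcal L$; $\mathcal U_\ell(K)$ is the set of $Q$ for which $K$ is $Q$-uniform w.r.t. some $\ell$-split order on $V(K)$, and $\mathcal U_\ell$ of a family is the union. For a model $M$ of $T_{\mathrm{Graph}}\cup T_{\mathcal L}$ and $Q\in\mathcal P_{\ell,\mathcal L}$, an $E$-proper $Q$-split ordering of $M$ is $(f,\preceq)\in\mathcal S_{\ell,V(M)}$ such that $J(M)$ is $Q$-uniform w.r.t. $(f,\preceq)$ and $f$ is a proper coloring of the graph part of $M$. $\chi^E_\ell(M)$ is the set of $Q\in\mathcal P_{\ell,\mathcal L}$ such that $M$ has an $E$-proper $Q$-split ordering, and $\chi^E_\ell(\mathcal F)=\bigcup_{M\in\mathcal F}\chi^E_\ell(M)$. *)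

theory Defs
  imports Main "HOL-Library.Extended_Nat"
begin

text \<open>A predicate symbol of type 'p has arity k P;
  a k-tuple of vertices is a list of length k (index set {0..<k} plays the role of [k]).
  The graph predicate E is kept separately as the field edges (so E is not in L).\<close>

record ('v, 'p) lstr =
  verts :: "'v set"
  rels  :: "'p \<Rightarrow> 'v list set"

record ('v, 'p) gstr = "('v, 'p) lstr" +
  edges :: "('v \<times> 'v) set"

definition inj_tuples :: "'v set \<Rightarrow> nat \<Rightarrow> 'v list set" where
  "inj_tuples V k = {\<alpha>. length \<alpha> = k \<and> distinct \<alpha> \<and> set \<alpha> \<subseteq> V}"

text \<open>Models of T_Graph \<union> T_L (finite, canonical, simple graph on the same vertex set).\<close>
definition is_model :: "'p set \<Rightarrow> ('p \<Rightarrow> nat) \<Rightarrow> ('v, 'p) gstr \<Rightarrow> bool" where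
  "is_model L k M \<longleftrightarrow> finite (verts M)
     \<and> edges M \<subseteq> verts M \<times> verts M \<and> sym (edges M) \<and> irrefl (edges M)
     \<and> (\<forall>P\<in>L. rels M P \<subseteq> inj_tuples (verts M) (k P))
     \<and> (\<forall>P. P \<notin> L \<longrightarrow> rels M P = {})"

definition J :: "('v, 'p) gstr \<Rightarrow> ('v, 'p) lstr" where
  "J M = \<lparr>verts = verts M, rels = rels M\<rparr>"

definition iso :: "('v, 'p) gstr \<Rightarrow> ('w, 'p) gstr \<Rightarrow> bool" where
  "iso M M' \<longleftrightarrow> (\<exists>h. bij_betw h (verts M) (verts M')
     \<and> edges M' = (\<lambda>(x, y). (h x, h y)) ` edges M
     \<and> (\<forall>P. rels M' P = map h ` rels M P))"

definition induced :: "('v, 'p) gstr \<Rightarrow> 'v set \<Rightarrow> ('v, 'p) gstr" where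
  "induced M W = \<lparr>verts = W, rels = (\<lambda>P. {\<alpha>\<in>rels M P. set \<alpha> \<subseteq> W}),
                   edges = edges M \<inter> (W \<times> W)\<rparr>"

text \<open>Forb_{T_Graph \<union> T_L}(G), with models on natural-number vertices
  (every finite structure is isomorphic to one of these).\<close>
definition forb_models :: "'p set \<Rightarrow> ('p \<Rightarrow> nat) \<Rightarrow> ('v, 'p) gstr set \<Rightarrow> (nat, 'p) gstr set" where
  "forb_models L k G = {M. is_model L k M \<and>
     (\<forall>W \<subseteq> verts M. \<forall>F\<in>G. \<not> iso (induced M W) F)}"

definition up_E :: "'p set \<Rightarrow> ('p \<Rightarrow> nat) \<Rightarrow> ('v, 'p) gstr set \<Rightarrow> ('v, 'p) gstr set" where
  "up_E L k Fam = {F'. is_model L k F' \<and> (\<exists>F\<in>Fam. verts F' = verts F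
      \<and> edges F \<subseteq> edges F' \<and> (\<forall>P\<in>L. rels F' P = rels F P))}"

text \<open>T_{n,l} \<subseteq> G : balanced complete l-partite graph on {0..<n} (parts: residues mod l)
  embeds injectively mapping edges to edges.\<close>
definition contains_partite :: "nat \<Rightarrow> nat \<Rightarrow> ('v \<times> 'v) set \<Rightarrow> 'v set \<Rightarrow> bool" where
  "contains_partite n l E V \<longleftrightarrow> (\<exists>g. inj_on g {0..<n} \<and> g ` {0..<n} \<subseteq> V \<and>
     (\<forall>i<n. \<forall>j<n. i mod l \<noteq> j mod l \<longrightarrow> (g i, g j) \<in> E))"

text \<open>chi(I) for I : T_Graph \<leadsto> Forb(F\<up>^E) acting identically on E (so I(N) is the graph part of N).\<close>
definition chi :: "'p set \<Rightarrow> ('p \<Rightarrow> nat) \<Rightarrow> ('v, 'p) gstr set \<Rightarrow> enat" where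
  "chi L k Fam = Sup (enat ` ({l. l \<ge> 1 \<and> (\<forall>n. \<exists>N\<in>forb_models L k (up_E L k Fam).
        card (verts N) = n \<and> contains_partite n l (edges N) (verts N))} \<union> {0})) + 1"

text \<open>l-split orders over V: colouring f : V \<rightarrow> {1..l} (0 outside V, for canonicity) and
  a reflexive partial order r on V whose comparability classes are the colour classes.\<close>
definition split_orders :: "nat \<Rightarrow> 'a set \<Rightarrow> (('a \<Rightarrow> nat) \<times> ('a \<times> 'a) set) set" where
  "split_orders l V = {(f, r). (\<forall>v\<in>V. f v \<in> {1..l}) \<and> (\<forall>v. v \<notin> V \<longrightarrow> f v = 0)
     \<and> r \<subseteq> V \<times> V \<and> refl_on V r \<and> trans r \<and> antisym r
     \<and> (\<forall>v\<in>V. \<forall>w\<in>V. ((v, w) \<in> r \<or> (w, v) \<in> r) \<longleftrightarrow> f v = f w)}"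

definition pull :: "('v \<Rightarrow> nat) \<times> ('v \<times> 'v) set \<Rightarrow> 'v list \<Rightarrow> (nat \<Rightarrow> nat) \<times> (nat \<times> nat) set" where
  "pull s \<alpha> = ((\<lambda>i. if i < length \<alpha> then fst s (\<alpha> ! i) else 0),
               {(i, j). i < length \<alpha> \<and> j < length \<alpha> \<and> (\<alpha> ! i, \<alpha> ! j) \<in> snd s})"

definition ramsey_patterns :: "nat \<Rightarrow> 'p set \<Rightarrow> ('p \<Rightarrow> nat)
     \<Rightarrow> ('p \<Rightarrow> ((nat \<Rightarrow> nat) \<times> (nat \<times> nat) set) set) set" where
  "ramsey_patterns l L k = {Q. (\<forall>P\<in>L. Q P \<subseteq> split_orders l {0..<k P}) \<and> (\<forall>P. P \<notin> L \<longrightarrow> Q P = {})}"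

definition uniform :: "'p set \<Rightarrow> ('p \<Rightarrow> nat) \<Rightarrow> ('v, 'p) lstr
     \<Rightarrow> ('p \<Rightarrow> ((nat \<Rightarrow> nat) \<times> (nat \<times> nat) set) set) \<Rightarrow> ('v \<Rightarrow> nat) \<times> ('v \<times> 'v) set \<Rightarrow> bool" where
  "uniform L k K Q s \<longleftrightarrow> (\<forall>P\<in>L. rels K P = {\<alpha>\<in>inj_tuples (verts K) (k P). pull s \<alpha> \<in> Q P})"

definition U :: "nat \<Rightarrow> 'p set \<Rightarrow> ('p \<Rightarrow> nat) \<Rightarrow> ('v, 'p) lstr
     \<Rightarrow> ('p \<Rightarrow> ((nat \<Rightarrow> nat) \<times> (nat \<times> nat) set) set) set" where
  "U l L k K = {Q\<in>ramsey_patterns l L k. \<exists>s\<in>split_orders l (verts K). uniform L k K Q s}"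

definition U_fam :: "nat \<Rightarrow> 'p set \<Rightarrow> ('p \<Rightarrow> nat) \<Rightarrow> ('v, 'p) lstr set
     \<Rightarrow> ('p \<Rightarrow> ((nat \<Rightarrow> nat) \<times> (nat \<times> nat) set) set) set" where
  "U_fam l L k Ks = (\<Union>K\<in>Ks. U l L k K)"

definition chiE :: "nat \<Rightarrow> 'p set \<Rightarrow> ('p \<Rightarrow> nat) \<Rightarrow> ('v, 'p) gstr
     \<Rightarrow> ('p \<Rightarrow> ((nat \<Rightarrow> nat) \<times> (nat \<times> nat) set) set) set" where
  "chiE l L k M = {Q\<in>ramsey_patterns l L k. \<exists>s\<in>split_orders l (verts M).
      uniform L k (J M) Q s \<and> (\<forall>(x, y)\<in>edges M. fst s x \<noteq> fst s y)}"

definition chiE_fam :: "nat \<Rightarrow> 'p set \<Rightarrow> ('p \<Rightarrow> nat) \<Rightarrow> ('v, 'p) gstr set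
     \<Rightarrow> ('p \<Rightarrow> ((nat \<Rightarrow> nat) \<times> (nat \<times> nat) set) set) set" where
  "chiE_fam l L k Fam = (\<Union>M\<in>Fam. chiE l L k M)"

end

theory Submission
  imports Defs "HOL-Library.Ramsey"
begin


lemma hom1:
  "\<exists>N. \<forall>H::nat set. finite H \<longrightarrow> N \<le> card H \<longrightarrow>
     (\<forall>c::nat set \<Rightarrow> bool. \<exists>H'\<subseteq>H. card H' = m \<and> (\<exists>b. \<forall>X. X \<subseteq> H' \<longrightarrow> card X = r \<longrightarrow> c X = b))"
proof -
  obtain N::nat where N: "partn_lst {..<N} [m,m] r" using ramsey_full[of "[m,m]" r] by blast
  show ?thesis
  proof (rule exI[of _ N], intro allI impI)
    fix H :: "nat set" and c :: "nat set \<Rightarrow> bool"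
    assume fH: "finite H" and NH: "N \<le> card H"
    obtain e where e: "bij_betw e {0..<card H} H" using ex_bij_betw_nat_finite fH by blast
    have sub: "{..<N} \<subseteq> {0..<card H}" using NH by auto
    have einj: "inj_on e {..<N}" using e sub
      by (meson bij_betw_imp_inj_on inj_on_subset)
    have eim: "e ` {..<N} \<subseteq> H" using e sub
      by (metis bij_betw_def image_mono)
    define f where "f = (\<lambda>X. if c (e ` X) then 0 else (1::nat))"
    have "f \<in> nsets {..<N} r \<rightarrow> {..<length [m,m]}" by (auto simp: f_def)
    then obtain i H0 where i: "i < length [m,m]" and H0: "H0 \<in> nsets {..<N} ([m,m]!i)"
      and fi: "f ` (nsets H0 r) \<subseteq> {i}"
      using partn_lstE[OF N] by blast
    have m: "[m,m]!i = m" using i by (cases i) auto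
    have H0s: "H0 \<subseteq> {..<N}" "finite H0" "card H0 = m" using H0 m by (auto simp: nsets_def)
    have inj0: "inj_on e H0" using einj H0s inj_on_subset by blast
    have "\<forall>X. X \<subseteq> e ` H0 \<longrightarrow> card X = r \<longrightarrow> c X = (i = 0)"
    proof (intro allI impI)
      fix X assume X: "X \<subseteq> e ` H0" "card X = r"
      define Y where "Y = H0 \<inter> e -` X"
      have XY: "X = e ` Y" using X Y_def by auto
      have "card Y = r" using XY X inj0 Y_def
        by (metis card_image inf_le1 inj_on_subset)
      hence "Y \<in> nsets H0 r" using H0s Y_def by (auto simp: nsets_def intro: finite_subset)
      hence "f Y = i" using fi by blast
      thus "c X = (i = 0)" using XY by (auto simp: f_def split: if_splits)
    qed
    hence hb: "\<exists>b. \<forall>X. X \<subseteq> e ` H0 \<longrightarrow> card X = r \<longrightarrow> c X = b" by (rule exI)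
    have "e ` H0 \<subseteq> H" using eim H0s by blast
    moreover have "card (e ` H0) = m" using card_image[OF inj0] H0s(3) by simp
    ultimately show "\<exists>H'\<subseteq>H. card H' = m \<and> (\<exists>b. \<forall>X. X \<subseteq> H' \<longrightarrow> card X = r \<longrightarrow> c X = b)"
      using hb by (intro exI[of _ "e ` H0"] conjI)
  qed
qed

lemma homQ:
  fixes Qs :: "'q set" and ar :: "'q \<Rightarrow> nat"
  assumes "finite Qs"
  shows "\<exists>N. \<forall>H::nat set. finite H \<longrightarrow> N \<le> card H \<longrightarrow>
     (\<forall>c::'q \<Rightarrow> nat set \<Rightarrow> bool. \<exists>H'\<subseteq>H. card H' = m \<and>
        (\<forall>q\<in>Qs. \<exists>b. \<forall>X. X \<subseteq> H' \<longrightarrow> card X = ar q \<longrightarrow> c q X = b))"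
  using assms
proof (induction Qs arbitrary: m rule: finite_induct)
  case empty
  show ?case
  proof (rule exI[of _ m], intro allI impI)
    fix H :: "nat set" and c :: "'q \<Rightarrow> nat set \<Rightarrow> bool"
    assume "finite H" "m \<le> card H"
    then obtain H' where "H' \<subseteq> H" "card H' = m" using obtain_subset_with_card_n by metis
    thus "\<exists>H'\<subseteq>H. card H' = m \<and> (\<forall>q\<in>{}. \<exists>b. \<forall>X. X \<subseteq> H' \<longrightarrow> card X = ar q \<longrightarrow> c q X = b)"
      by (intro exI[of _ H']) simp
  qed
next
  case (insert q Qs)
  obtain N1 where N1: "\<forall>H::nat set. finite H \<longrightarrow> N1 \<le> card H \<longrightarrow>
     (\<forall>c::'q \<Rightarrow> nat set \<Rightarrow> bool. \<exists>H'\<subseteq>H. card H' = m \<and>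
        (\<forall>q\<in>Qs. \<exists>b. \<forall>X. X \<subseteq> H' \<longrightarrow> card X = ar q \<longrightarrow> c q X = b))"
    using insert.IH[of m] by blast
  obtain N where N: "\<forall>H::nat set. finite H \<longrightarrow> N \<le> card H \<longrightarrow>
     (\<forall>c::nat set \<Rightarrow> bool. \<exists>H'\<subseteq>H. card H' = N1 \<and> (\<exists>b. \<forall>X. X \<subseteq> H' \<longrightarrow> card X = ar q \<longrightarrow> c X = b))"
    using hom1[of N1 "ar q"] by blast
  show ?case
  proof (rule exI[of _ N], intro allI impI)
    fix H :: "nat set" and c :: "'q \<Rightarrow> nat set \<Rightarrow> bool"
    assume H: "finite H" "N \<le> card H"
    obtain H1 b1 where H1: "H1 \<subseteq> H" "card H1 = N1"
      and b1: "\<forall>X. X \<subseteq> H1 \<longrightarrow> card X = ar q \<longrightarrow> c q X = b1"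
      using N[rule_format, OF H(1) H(2), of "c q"] by auto
    have "finite H1" using H1 H finite_subset by blast
    then obtain H' where H': "H' \<subseteq> H1" "card H' = m"
      and hs: "\<forall>q\<in>Qs. \<exists>b. \<forall>X. X \<subseteq> H' \<longrightarrow> card X = ar q \<longrightarrow> c q X = b"
    proof -
      have "N1 \<le> card H1" using H1(2) by simp
      from N1[rule_format, OF \<open>finite H1\<close> this, of c] show ?thesis using that by auto
    qed
    show "\<exists>H'\<subseteq>H. card H' = m \<and> (\<forall>q\<in>insert q Qs. \<exists>b. \<forall>X. X \<subseteq> H' \<longrightarrow> card X = ar q \<longrightarrow> c q X = b)"
    proof (intro exI[of _ H'] conjI ballI)
      show "H' \<subseteq> H" using H' H1 by blast
      show "card H' = m" using H' by blast
      fix q' assume q': "q' \<in> insert q Qs"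
      show "\<exists>b. \<forall>X. X \<subseteq> H' \<longrightarrow> card X = ar q' \<longrightarrow> c q' X = b"
      proof (cases "q' = q")
        case True thus ?thesis using b1 H'(1) by (metis subset_trans)
      next
        case False hence "q' \<in> Qs" using q' by simp
        thus ?thesis using hs by simp
      qed
    qed
  qed
qed

lemma sorted_idx:
  fixes X :: "nat set"
  assumes "finite X" "x \<in> X"
  shows "sorted_list_of_set X ! card {y\<in>X. y < x} = x"
proof -
  define xs where "xs = sorted_list_of_set X"
  have st: "sorted_wrt (<) xs" and sx: "set xs = X" and dx: "distinct xs"
    using assms xs_def by auto
  obtain p where p: "p < length xs" "xs ! p = x" using assms sx by (metis in_set_conv_nth)
  have "{y\<in>X. y < x} = (\<lambda>q. xs!q) ` {..<p}"
  proof
    show "{y\<in>X. y < x} \<subseteq> (\<lambda>q. xs!q) ` {..<p}"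
    proof
      fix y assume y: "y \<in> {y\<in>X. y < x}"
      then obtain q where q: "q < length xs" "xs!q = y" using sx by (metis (no_types, lifting) in_set_conv_nth mem_Collect_eq)
      have "q < p"
      proof (rule ccontr)
        assume "\<not> q < p"
        hence "xs!p \<le> xs!q" using st q p
          by (metis linorder_not_less nless_le order.refl sorted_wrt_nth_less)
        thus False using y q p by auto
      qed
      thus "y \<in> (\<lambda>q. xs!q) ` {..<p}" using q by auto
    qed
    show "(\<lambda>q. xs!q) ` {..<p} \<subseteq> {y\<in>X. y < x}"
      using st p sx by (auto simp: sorted_wrt_nth_less)
  qed
  moreover have "inj_on (\<lambda>q. xs!q) {..<p}" using dx p
    by (simp add: inj_on_def nth_eq_iff_index_eq)
  ultimately have "card {y\<in>X. y < x} = p" by (simp add: card_image)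
  thus ?thesis using p xs_def by simp
qed



definition phi :: "nat \<Rightarrow> nat \<times> nat \<Rightarrow> nat" where
  "phi m p = (fst p - 1) * m + snd p"

definition cd :: "nat \<Rightarrow> (nat \<times> nat) list \<Rightarrow> (nat \<times> nat) list" where
  "cd m ps = map (\<lambda>p. (fst p, card {p'\<in>set ps. phi m p' < phi m p})) ps"

lemma phi_lt:
  assumes "p \<in> {1..l} \<times> {0..<m}"
  shows "phi m p < l * m"
proof -
  obtain j s where p: "p = (j,s)" "1 \<le> j" "j \<le> l" "s < m" using assms by auto
  have "(j - 1) * m + s < (j - 1) * m + m" using p by simp
  also have "\<dots> = j * m" using p(2) by (cases j) auto
  also have "\<dots> \<le> l * m" using p(3) by simp
  finally show ?thesis using p by (simp add: phi_def)
qed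

lemma phi_less_iff:
  assumes "p \<in> {1..l} \<times> {0..<m}" "q \<in> {1..l} \<times> {0..<m}"
  shows "phi m p < phi m q \<longleftrightarrow> fst p < fst q \<or> (fst p = fst q \<and> snd p < snd q)"
proof -
  obtain j s where p: "p = (j,s)" "1 \<le> j" "j \<le> l" "s < m" using assms by auto
  obtain j' s' where q: "q = (j',s')" "1 \<le> j'" "j' \<le> l" "s' < m" using assms by auto
  have A: "(j-1)*m + s < (j'-1)*m + s' \<longleftrightarrow> j - 1 < j' - 1 \<or> (j - 1 = j' - 1 \<and> s < s')"
  proof
    assume h: "(j-1)*m + s < (j'-1)*m + s'"
    show "j - 1 < j' - 1 \<or> (j - 1 = j' - 1 \<and> s < s')"
    proof (rule ccontr)
      assume "\<not> ?thesis"
      hence "j' - 1 < j - 1 \<or> (j - 1 = j' - 1 \<and> s' \<le> s)" by auto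
      thus False
      proof
        assume "j' - 1 < j - 1"
        hence "(j'-1)*m + m \<le> (j-1)*m" 
          by (metis add.commute mult_Suc mult_le_mono1 Suc_leI)
        thus False using h q(4) by linarith
      next
        assume "j - 1 = j' - 1 \<and> s' \<le> s" thus False using h by simp
      qed
    qed
  next
    assume "j - 1 < j' - 1 \<or> (j - 1 = j' - 1 \<and> s < s')"
    thus "(j-1)*m + s < (j'-1)*m + s'"
    proof
      assume "j - 1 < j' - 1"
      hence "(j-1)*m + m \<le> (j'-1)*m"
        by (metis add.commute mult_Suc mult_le_mono1 Suc_leI)
      thus ?thesis using p(4) by linarith
    qed simp
  qed
  show ?thesis using A p q by (auto simp: phi_def)
qed

lemma phi_inj: "inj_on (phi m) ({1..l} \<times> {0..<m})"
proof (rule inj_onI)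
  fix p q assume pq: "p \<in> {1..l} \<times> {0..<m}" "q \<in> {1..l} \<times> {0..<m}" "phi m p = phi m q"
  have "\<not> phi m p < phi m q" "\<not> phi m q < phi m p" using pq(3) by auto
  thus "p = q" using phi_less_iff[OF pq(1,2)] phi_less_iff[OF pq(2,1)]
    by (metis linorder_neqE_nat prod.collapse)
qed

definition Qset :: "'p set \<Rightarrow> ('p \<Rightarrow> nat) \<Rightarrow> nat \<Rightarrow> ('p \<times> (nat \<times> nat) list) set" where
  "Qset L k l = {(P, ys). P \<in> L \<and> length ys = k P \<and> set ys \<subseteq> {1..l} \<times> {..<k P}}"

lemma finite_Qset:
  assumes "finite L" shows "finite (Qset L k l)"
proof -
  have "Qset L k l \<subseteq> (SIGMA P:L. {ys. set ys \<subseteq> {1..l} \<times> {..<k P} \<and> length ys = k P})"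
    by (auto simp: Qset_def)
  moreover have "finite (SIGMA P:L. {ys. set ys \<subseteq> {1..l} \<times> {..<k P} \<and> length ys = k P})"
    using assms by (intro finite_SigmaI finite_lists_length_eq) auto
  ultimately show ?thesis by (rule finite_subset)
qed

lemma GR:
  fixes L :: "'p set" and k :: "'p \<Rightarrow> nat"
  assumes "finite L"
  shows "\<exists>M. \<forall>(a :: nat \<times> nat \<Rightarrow> 'v) (R :: 'p \<Rightarrow> 'v list set). \<exists>e b.
     (\<forall>i<l*m. e i < M) \<and> (\<forall>i j. i < j \<longrightarrow> j < l*m \<longrightarrow> e i < e j) \<and>
     (\<forall>P\<in>L. \<forall>ps. length ps = k P \<longrightarrow> distinct ps \<longrightarrow> set ps \<subseteq> {1..l}\<times>{0..<m} \<longrightarrow>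
        (map (\<lambda>p. a (fst p, e (phi m p))) ps \<in> R P \<longleftrightarrow> b P (cd m ps)))"
proof -
  define ar where "ar = (\<lambda>q::'p \<times> (nat \<times> nat) list. k (fst q))"
  obtain N where N: "\<forall>H::nat set. finite H \<longrightarrow> N \<le> card H \<longrightarrow>
     (\<forall>c::'p \<times> (nat \<times> nat) list \<Rightarrow> nat set \<Rightarrow> bool. \<exists>H'\<subseteq>H. card H' = l*m \<and>
        (\<forall>q\<in>Qset L k l. \<exists>b. \<forall>X. X \<subseteq> H' \<longrightarrow> card X = ar q \<longrightarrow> c q X = b))"
    using homQ[OF finite_Qset[OF assms, of k l], of "l*m" ar] by blast
  show ?thesis
  proof (rule exI[of _ N], intro allI)
    fix a :: "nat \<times> nat \<Rightarrow> 'v" and R :: "'p \<Rightarrow> 'v list set"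
    define c where "c = (\<lambda>q::'p \<times> (nat \<times> nat) list. \<lambda>X.
        map (\<lambda>jp. a (fst jp, sorted_list_of_set X ! snd jp)) (snd q) \<in> R (fst q))"
    have "N \<le> card {0..<N}" by simp
    then obtain H' where H': "H' \<subseteq> {0..<N}" "card H' = l*m"
      and hom: "\<forall>q\<in>Qset L k l. \<exists>b. \<forall>X. X \<subseteq> H' \<longrightarrow> card X = ar q \<longrightarrow> c q X = b"
      using N[rule_format, of "{0..<N}" c] by blast
    have fH': "finite H'" using H' finite_subset by blast
    define e where "e = (\<lambda>i. sorted_list_of_set H' ! i)"
    define b where "b = (\<lambda>P ys. SOME b. \<forall>X. X \<subseteq> H' \<longrightarrow> card X = k P \<longrightarrow> c (P, ys) X = b)"
    have len: "length (sorted_list_of_set H') = l*m" using H' fH' by simp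
    have eH: "\<And>i. i < l*m \<Longrightarrow> e i \<in> H'" using len e_def fH'
      by (metis nth_mem set_sorted_list_of_set)
    have emono: "\<forall>i j. i < j \<longrightarrow> j < l*m \<longrightarrow> e i < e j"
      using len fH' by (auto simp: e_def intro: sorted_wrt_nth_less)
    have elt: "\<forall>i<l*m. e i < N"
    proof (intro allI impI)
      fix i assume "i < l*m"
      hence "e i \<in> {0..<N}" using eH H'(1) by blast
      thus "e i < N" by simp
    qed
    have bspec: "\<And>P ys X. (P, ys) \<in> Qset L k l \<Longrightarrow> X \<subseteq> H' \<Longrightarrow> card X = k P \<Longrightarrow> c (P, ys) X = b P ys"
    proof -
      fix P ys X assume q: "(P, ys) \<in> Qset L k l" and X: "X \<subseteq> H'" "card X = k P"
      have "\<exists>b. \<forall>X. X \<subseteq> H' \<longrightarrow> card X = k P \<longrightarrow> c (P, ys) X = b" using bspec[OF hom q] by (simp add: ar_def)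
      hence "\<forall>X. X \<subseteq> H' \<longrightarrow> card X = k P \<longrightarrow> c (P, ys) X = b P ys"
        unfolding b_def by (rule someI_ex)
      thus "c (P, ys) X = b P ys" using X by blast
    qed
    have main: "\<forall>P\<in>L. \<forall>ps. length ps = k P \<longrightarrow> distinct ps \<longrightarrow> set ps \<subseteq> {1..l}\<times>{0..<m} \<longrightarrow>
        (map (\<lambda>p. a (fst p, e (phi m p))) ps \<in> R P \<longleftrightarrow> b P (cd m ps))"
    proof (intro ballI allI impI)
      fix P ps assume P: "P \<in> L" and ps: "length ps = k P" "distinct ps" "set ps \<subseteq> {1..l}\<times>{0..<m}"
      define X where "X = (\<lambda>p. e (phi m p)) ` set ps"
      have emono': "\<And>p q. p \<in> set ps \<Longrightarrow> q \<in> set ps \<Longrightarrow> e (phi m p) < e (phi m q) \<longleftrightarrow> phi m p < phi m q"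
      proof -
        fix p q assume pq: "p \<in> set ps" "q \<in> set ps"
        have "phi m p < l*m" "phi m q < l*m" using pq ps phi_lt by blast+
        thus "e (phi m p) < e (phi m q) \<longleftrightarrow> phi m p < phi m q"
          using emono by (metis linorder_neqE_nat order_less_asym)
      qed
      have injX: "inj_on (\<lambda>p. e (phi m p)) (set ps)"
      proof (rule inj_onI)
        fix p q assume "p \<in> set ps" "q \<in> set ps" "e (phi m p) = e (phi m q)"
        hence "phi m p = phi m q" using emono' by (metis linorder_neqE_nat order_less_irrefl)
        thus "p = q" using phi_inj[of m l] ps \<open>p \<in> set ps\<close> \<open>q \<in> set ps\<close> by (meson inj_onD subsetD)
      qed
      have XH: "X \<subseteq> H'" using eH phi_lt ps by (auto simp: X_def)
      have cX: "card X = k P" using injX ps by (simp add: X_def card_image distinct_card)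
      have fX: "finite X" by (simp add: X_def)
      have cnt: "\<And>p. p \<in> set ps \<Longrightarrow> card {p'\<in>set ps. phi m p' < phi m p} = card {y\<in>X. y < e (phi m p)}"
      proof -
        fix p assume p: "p \<in> set ps"
        have "{y\<in>X. y < e (phi m p)} = (\<lambda>p. e (phi m p)) ` {p'\<in>set ps. phi m p' < phi m p}"
        proof (intro equalityI subsetI)
          fix y assume "y \<in> {y\<in>X. y < e (phi m p)}"
          then obtain p' where p': "p' \<in> set ps" "y = e (phi m p')" "y < e (phi m p)"
            unfolding X_def by blast
          then show "y \<in> (\<lambda>p. e (phi m p)) ` {p'\<in>set ps. phi m p' < phi m p}"
            using emono'[OF p'(1) p] by blast
        next
          fix y assume "y \<in> (\<lambda>p. e (phi m p)) ` {p'\<in>set ps. phi m p' < phi m p}"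
          then obtain p' where p': "p' \<in> set ps" "phi m p' < phi m p" "y = e (phi m p')" by blast
          thus "y \<in> {y\<in>X. y < e (phi m p)}" using emono'[OF p'(1) p] unfolding X_def by blast
        qed
        moreover have "inj_on (\<lambda>p. e (phi m p)) {p'\<in>set ps. phi m p' < phi m p}"
          using injX inj_on_subset by fastforce
        ultimately show "card {p'\<in>set ps. phi m p' < phi m p} = card {y\<in>X. y < e (phi m p)}"
          by (simp add: card_image)
      qed
      have cdq: "(P, cd m ps) \<in> Qset L k l"
      proof -
        have "\<And>p. p \<in> set ps \<Longrightarrow> card {p'\<in>set ps. phi m p' < phi m p} < k P"
        proof -
          fix p assume p: "p \<in> set ps"
          have "{p'\<in>set ps. phi m p' < phi m p} \<subseteq> set ps - {p}" by auto
          hence "card {p'\<in>set ps. phi m p' < phi m p} \<le> card (set ps - {p})"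
            by (simp add: card_mono)
          also have "\<dots> < k P" using p ps distinct_card[OF ps(2)] by (metis card_Diff1_less finite_set)
          finally show "card {p'\<in>set ps. phi m p' < phi m p} < k P" .
        qed
        thus ?thesis using P ps by (auto simp: Qset_def cd_def)
      qed
      have "c (P, cd m ps) X = (map (\<lambda>p. a (fst p, e (phi m p))) ps \<in> R P)"
      proof -
        have "map (\<lambda>jp. a (fst jp, sorted_list_of_set X ! snd jp)) (cd m ps)
            = map (\<lambda>p. a (fst p, e (phi m p))) ps"
          unfolding cd_def map_map
        proof (rule map_cong[OF refl])
          fix p assume p: "p \<in> set ps"
          have "e (phi m p) \<in> X" using p by (simp add: X_def)
          thus "((\<lambda>jp. a (fst jp, sorted_list_of_set X ! snd jp)) \<circ> (\<lambda>p. (fst p, card {p'\<in>set ps. phi m p' < phi m p}))) p = a (fst p, e (phi m p))"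
            using cnt[OF p] sorted_idx[OF fX] by simp
        qed
        thus ?thesis by (simp add: c_def)
      qed
      thus "map (\<lambda>p. a (fst p, e (phi m p))) ps \<in> R P \<longleftrightarrow> b P (cd m ps)"
        using bspec[OF cdq XH cX] by simp
    qed
    show "\<exists>e b. (\<forall>i<l*m. e i < N) \<and> (\<forall>i j. i < j \<longrightarrow> j < l*m \<longrightarrow> e i < e j) \<and>
     (\<forall>P\<in>L. \<forall>ps. length ps = k P \<longrightarrow> distinct ps \<longrightarrow> set ps \<subseteq> {1..l}\<times>{0..<m} \<longrightarrow>
        (map (\<lambda>p. a (fst p, e (phi m p))) ps \<in> R P \<longleftrightarrow> b P (cd m ps)))"
      using elt emono main by blast
  qed
qed



lemma EMB:
  fixes N :: "(nat, 'p) gstr" and F :: "('v, 'p) gstr" and h :: "'v \<Rightarrow> nat"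
  assumes N: "is_model L k N" and F: "is_model L k F" and FF: "F \<in> Fam"
    and hinj: "inj_on h (verts F)" and him: "h ` verts F \<subseteq> verts N"
    and hrel: "\<forall>P\<in>L. \<forall>\<beta>\<in>inj_tuples (verts F) (k P). \<beta> \<in> rels F P \<longleftrightarrow> map h \<beta> \<in> rels N P"
    and hedge: "\<forall>(x, y)\<in>edges F. (h x, h y) \<in> edges N"
  shows "N \<notin> forb_models L k (up_E L k Fam)"
proof
  assume Nf: "N \<in> forb_models L k (up_E L k Fam)"
  define V where "V = verts F"
  define W where "W = h ` V"
  define G where "G = \<lparr>verts = V, rels = rels F, edges = {(x,y). x \<in> V \<and> y \<in> V \<and> (h x, h y) \<in> edges N}\<rparr>"
  define g where "g = inv_into V h"
  have hinj': "inj_on h V" using hinj V_def by simp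
  have gh: "\<And>x. x \<in> V \<Longrightarrow> g (h x) = x" using hinj' g_def by simp
  have hg: "\<And>u. u \<in> W \<Longrightarrow> h (g u) = u" using W_def g_def by (simp add: f_inv_into_f)
  have gW: "\<And>u. u \<in> W \<Longrightarrow> g u \<in> V" using W_def g_def by (simp add: inv_into_into)
  have bh: "bij_betw h V W" using hinj' W_def by (simp add: bij_betw_imageI)
  have bg: "bij_betw g W V" using bij_betw_inv_into[OF bh] g_def by simp
  have Nm: "finite (verts N)" "edges N \<subseteq> verts N \<times> verts N" "sym (edges N)" "irrefl (edges N)"
      "\<forall>P\<in>L. rels N P \<subseteq> inj_tuples (verts N) (k P)" "\<forall>P. P \<notin> L \<longrightarrow> rels N P = {}"
    using N by (auto simp: is_model_def)
  have Fm: "finite V" "edges F \<subseteq> V \<times> V"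
      "\<forall>P\<in>L. rels F P \<subseteq> inj_tuples V (k P)" "\<forall>P. P \<notin> L \<longrightarrow> rels F P = {}"
    using F by (auto simp: is_model_def V_def)
  have Gmod: "is_model L k G"
    unfolding is_model_def G_def using Fm Nm
    by (auto simp: sym_def irrefl_def)
  have GU: "G \<in> up_E L k Fam"
    unfolding up_E_def using Gmod FF hedge Fm(2)
    by (auto simp: G_def V_def intro!: bexI[of _ F])
  have WN: "W \<subseteq> verts N" using him W_def V_def by simp
  have "iso (induced N W) G"
    unfolding iso_def
  proof (intro exI[of _ g] conjI allI)
    show "bij_betw g (verts (induced N W)) (verts G)" using bg by (simp add: induced_def G_def)
    show "edges G = (\<lambda>(x, y). (g x, g y)) ` edges (induced N W)"
    proof (intro equalityI subsetI)
      fix xy assume "xy \<in> edges G"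
      then obtain x y where xy: "xy = (x,y)" "x \<in> V" "y \<in> V" "(h x, h y) \<in> edges N" by (auto simp: G_def)
      hence "(h x, h y) \<in> edges (induced N W)" by (auto simp: induced_def W_def)
      moreover have "xy = (\<lambda>(x, y). (g x, g y)) (h x, h y)" using xy gh by simp
      ultimately show "xy \<in> (\<lambda>(x, y). (g x, g y)) ` edges (induced N W)" by blast
    next
      fix xy assume "xy \<in> (\<lambda>(x, y). (g x, g y)) ` edges (induced N W)"
      then obtain u v where uv: "xy = (g u, g v)" "(u,v) \<in> edges N" "u \<in> W" "v \<in> W"
        by (auto simp: induced_def)
      thus "xy \<in> edges G" using gW hg by (auto simp: G_def)
    qed
    fix P
    show "rels G P = map g ` rels (induced N W) P"
    proof (cases "P \<in> L")
      case False thus ?thesis using Fm Nm by (simp add: G_def induced_def)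
    next
      case True
      show ?thesis
      proof (intro equalityI subsetI)
        fix \<beta> assume b: "\<beta> \<in> rels G P"
        hence bi: "\<beta> \<in> inj_tuples V (k P)" using Fm True by (auto simp: G_def)
        hence "map h \<beta> \<in> rels N P" using hrel True b by (auto simp: G_def V_def)
        moreover have "set (map h \<beta>) \<subseteq> W" using bi by (auto simp: inj_tuples_def W_def)
        moreover have "map g (map h \<beta>) = \<beta>" using bi gh by (auto simp: inj_tuples_def map_idI subset_iff)
        ultimately show "\<beta> \<in> map g ` rels (induced N W) P"
          by (auto simp: induced_def intro!: image_eqI[of _ _ "map h \<beta>"])
      next
        fix \<beta> assume "\<beta> \<in> map g ` rels (induced N W) P"
        then obtain \<alpha> where a: "\<beta> = map g \<alpha>" "\<alpha> \<in> rels N P" "set \<alpha> \<subseteq> W"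
          by (auto simp: induced_def)
        have ai: "\<alpha> \<in> inj_tuples (verts N) (k P)" using a Nm True by auto
        have "distinct \<beta>" using a ai bg
          by (auto simp: inj_tuples_def distinct_map bij_betw_def intro: inj_on_subset)
        hence bi: "\<beta> \<in> inj_tuples V (k P)" using a ai gW by (auto simp: inj_tuples_def)
        have "map h \<beta> = \<alpha>" using a hg by (auto simp: map_idI subset_iff)
        hence "\<beta> \<in> rels F P" using hrel True bi a by (auto simp: V_def)
        thus "\<beta> \<in> rels G P" by (simp add: G_def)
      qed
    qed
  qed
  thus False using Nf WN GU by (auto simp: forb_models_def)
qed



lemma split_ordersD:
  assumes "(f, r) \<in> split_orders l V"
  shows "\<forall>v\<in>V. f v \<in> {1..l}" "\<forall>v. v \<notin> V \<longrightarrow> f v = 0" "r \<subseteq> V \<times> V" "refl_on V r" "trans r" "antisym r"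
    "\<forall>v\<in>V. \<forall>w\<in>V. ((v, w) \<in> r \<or> (w, v) \<in> r) \<longleftrightarrow> f v = f w"
  using assms by (auto simp: split_orders_def)

lemma pull_split:
  assumes s: "s \<in> split_orders l V" and a: "\<alpha> \<in> inj_tuples V kk"
  shows "pull s \<alpha> \<in> split_orders l {0..<kk}"
proof -
  obtain f r where sfr: "s = (f, r)" by fastforce
  note D = split_ordersD[OF s[unfolded sfr]]
  have al: "length \<alpha> = kk" "distinct \<alpha>" "set \<alpha> \<subseteq> V" using a by (auto simp: inj_tuples_def)
  have inV: "\<And>i. i < kk \<Longrightarrow> \<alpha>!i \<in> V" using al by auto
  have dd: "\<And>i j. i < kk \<Longrightarrow> j < kk \<Longrightarrow> \<alpha>!i = \<alpha>!j \<Longrightarrow> i = j" using al by (simp add: nth_eq_iff_index_eq)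
  define f' where "f' = fst (pull s \<alpha>)"
  define r' where "r' = snd (pull s \<alpha>)"
  have pe: "pull s \<alpha> = (f', r')" by (simp add: f'_def r'_def)
  have f'v: "\<And>i. f' i = (if i < kk then f (\<alpha>!i) else 0)" using al by (simp add: f'_def pull_def sfr)
  have r'v: "\<And>i j. (i, j) \<in> r' \<longleftrightarrow> i < kk \<and> j < kk \<and> (\<alpha>!i, \<alpha>!j) \<in> r"
    using al by (simp add: r'_def pull_def sfr)
  have 1: "\<forall>v\<in>{0..<kk}. f' v \<in> {1..l}" using D(1) inV f'v by simp
  have 2: "\<forall>v. v \<notin> {0..<kk} \<longrightarrow> f' v = 0" using f'v by simp
  have 3: "r' \<subseteq> {0..<kk} \<times> {0..<kk}" using r'v by auto
  have 4: "refl_on {0..<kk} r'" using D(4) inV r'v 3 by (auto simp: refl_on_def)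
  have 5: "trans r'" using D(5) r'v unfolding trans_def by blast
  have 6: "antisym r'" using D(6) dd r'v unfolding antisym_def by blast
  have 7: "\<forall>v\<in>{0..<kk}. \<forall>w\<in>{0..<kk}. ((v, w) \<in> r' \<or> (w, v) \<in> r') \<longleftrightarrow> f' v = f' w"
    using D(7) inV r'v f'v by simp
  show ?thesis unfolding pe split_orders_def mem_Collect_eq case_prod_conv using 1 2 3 4 5 6 7 by blast
qed

definition lexless :: "(nat \<Rightarrow> nat) \<times> (nat \<times> nat) set \<Rightarrow> nat \<Rightarrow> nat \<Rightarrow> bool" where
  "lexless \<sigma> i' i \<longleftrightarrow> fst \<sigma> i' < fst \<sigma> i \<or> (fst \<sigma> i' = fst \<sigma> i \<and> (i', i) \<in> snd \<sigma> \<and> i' \<noteq> i)"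

definition code :: "nat \<Rightarrow> (nat \<Rightarrow> nat) \<times> (nat \<times> nat) set \<Rightarrow> (nat \<times> nat) list" where
  "code kk \<sigma> = map (\<lambda>i. (fst \<sigma> i, card {i'. i' < kk \<and> lexless \<sigma> i' i})) [0..<kk]"

definition rank :: "'a set \<Rightarrow> ('a \<times> 'a) set \<Rightarrow> 'a \<Rightarrow> nat" where
  "rank V r x = card {z\<in>V. (z, x) \<in> r \<and> z \<noteq> x}"

definition pos :: "('a \<Rightarrow> nat) \<times> ('a \<times> 'a) set \<Rightarrow> 'a set \<Rightarrow> 'a \<Rightarrow> nat \<times> nat" where
  "pos s V x = (fst s x, rank V (snd s) x)"

lemma rank_lt:
  assumes s: "(f, r) \<in> split_orders l V" and fV: "finite V" and xy: "x \<in> V" "y \<in> V" "(x, y) \<in> r" "x \<noteq> y"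
  shows "rank V r x < rank V r y"
proof -
  note D = split_ordersD[OF s]
  have "{z\<in>V. (z, x) \<in> r \<and> z \<noteq> x} \<subset> {z\<in>V. (z, y) \<in> r \<and> z \<noteq> y}"
  proof
    show "{z\<in>V. (z, x) \<in> r \<and> z \<noteq> x} \<subseteq> {z\<in>V. (z, y) \<in> r \<and> z \<noteq> y}"
    proof
      fix z assume z: "z \<in> {z\<in>V. (z, x) \<in> r \<and> z \<noteq> x}"
      hence zx: "z \<in> V" "(z, x) \<in> r" "z \<noteq> x" by simp_all
      have "(z, y) \<in> r" using transD[OF D(5) zx(2) xy(3)] .
      moreover have "z \<noteq> y"
      proof
        assume "z = y" thus False using zx xy antisymD[OF D(6)] by blast
      qed
      ultimately show "z \<in> {z\<in>V. (z, y) \<in> r \<and> z \<noteq> y}" using zx by simp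
    qed
    have "x \<in> {z\<in>V. (z, y) \<in> r \<and> z \<noteq> y}" using xy by simp
    moreover have "x \<notin> {z\<in>V. (z, x) \<in> r \<and> z \<noteq> x}" by simp
    ultimately show "{z\<in>V. (z, x) \<in> r \<and> z \<noteq> x} \<noteq> {z\<in>V. (z, y) \<in> r \<and> z \<noteq> y}" by blast
  qed
  hence "card {z\<in>V. (z, x) \<in> r \<and> z \<noteq> x} < card {z\<in>V. (z, y) \<in> r \<and> z \<noteq> y}"
    by (rule psubset_card_mono[rotated]) (simp add: fV)
  thus ?thesis unfolding rank_def .
qed

lemma rank_less_iff:
  assumes s: "(f, r) \<in> split_orders l V" and fV: "finite V" and xy: "x \<in> V" "y \<in> V" "f x = f y"
  shows "rank V r x < rank V r y \<longleftrightarrow> (x, y) \<in> r \<and> x \<noteq> y"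
proof
  assume "(x, y) \<in> r \<and> x \<noteq> y" thus "rank V r x < rank V r y" using rank_lt[OF s fV] xy by blast
next
  assume lt: "rank V r x < rank V r y"
  hence ne: "x \<noteq> y" by (metis less_irrefl)
  have "(x, y) \<in> r \<or> (y, x) \<in> r" using split_ordersD(7)[OF s] xy by blast
  moreover have "(y, x) \<notin> r"
  proof
    assume "(y, x) \<in> r" hence "rank V r y < rank V r x" using rank_lt[OF s fV xy(2,1)] ne by blast
    thus False using lt by simp
  qed
  ultimately show "(x, y) \<in> r \<and> x \<noteq> y" using ne by blast
qed

lemma pos_range:
  assumes s: "s \<in> split_orders l V" and fV: "finite V" and m: "card V \<le> m" and x: "x \<in> V"
  shows "pos s V x \<in> {1..l} \<times> {0..<m}"
proof -
  obtain f r where sfr: "s = (f, r)" by fastforce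
  have "f x \<in> {1..l}" using split_ordersD(1)[OF s[unfolded sfr]] x by blast
  moreover have "rank V r x < m"
  proof -
    have "{z\<in>V. (z, x) \<in> r \<and> z \<noteq> x} \<subseteq> V - {x}" by blast
    hence "rank V r x \<le> card (V - {x})" unfolding rank_def by (rule card_mono[rotated]) (simp add: fV)
    also have "\<dots> < card V" by (rule card_Diff1_less[OF fV x])
    finally show ?thesis using m by simp
  qed
  ultimately show ?thesis by (simp add: pos_def sfr)
qed

lemma phi_pos:
  assumes s: "(f, r) \<in> split_orders l V" and fV: "finite V" and m: "card V \<le> m"
    and xy: "x \<in> V" "y \<in> V"
  shows "phi m (pos (f, r) V x) < phi m (pos (f, r) V y) \<longleftrightarrow> f x < f y \<or> (f x = f y \<and> (x, y) \<in> r \<and> x \<noteq> y)"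
proof -
  have "phi m (pos (f, r) V x) < phi m (pos (f, r) V y) \<longleftrightarrow> f x < f y \<or> (f x = f y \<and> rank V r x < rank V r y)"
    using phi_less_iff[OF pos_range[OF s fV m xy(1)] pos_range[OF s fV m xy(2)]] by (simp add: pos_def)
  thus ?thesis using rank_less_iff[OF s fV xy] by auto
qed

lemma pos_phi_inj:
  assumes s: "s \<in> split_orders l V" and fV: "finite V" and m: "card V \<le> m"
  shows "inj_on (\<lambda>x. phi m (pos s V x)) V"
proof (rule inj_onI)
  obtain f r where sfr: "s = (f, r)" by fastforce
  fix x y assume xy: "x \<in> V" "y \<in> V" "phi m (pos s V x) = phi m (pos s V y)"
  show "x = y"
  proof (rule ccontr)
    assume ne: "x \<noteq> y"
    have "\<not> phi m (pos s V x) < phi m (pos s V y)" "\<not> phi m (pos s V y) < phi m (pos s V x)" using xy by auto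
    hence "\<not> (f x = f y \<and> (x, y) \<in> r)" "\<not> (f y = f x \<and> (y, x) \<in> r)" "f x = f y"
      using phi_pos[OF s[unfolded sfr] fV m xy(1,2)] phi_pos[OF s[unfolded sfr] fV m xy(2,1)] ne sfr
      by auto
    thus False using split_ordersD(7)[OF s[unfolded sfr]] xy by blast
  qed
qed

lemma code_cd:
  assumes s: "s \<in> split_orders l V" and fV: "finite V" and m: "card V \<le> m"
    and b: "\<beta> \<in> inj_tuples V kk"
  shows "code kk (pull s \<beta>) = cd m (map (pos s V) \<beta>)"
proof -
  obtain f r where sfr: "s = (f, r)" by fastforce
  have bl: "length \<beta> = kk" "distinct \<beta>" "set \<beta> \<subseteq> V" using b by (auto simp: inj_tuples_def)
  have inV: "\<And>i. i < kk \<Longrightarrow> \<beta>!i \<in> V" using bl by auto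
  have eq: "\<beta> = map (\<lambda>i. \<beta>!i) [0..<kk]" using bl(1) map_nth[of \<beta>] by simp
  have pinj: "inj_on (pos s V) V"
    using pos_phi_inj[OF s fV m] unfolding inj_on_def by fastforce
  have "map (\<lambda>i. (fst (pull s \<beta>) i, card {i'. i' < kk \<and> lexless (pull s \<beta>) i' i})) [0..<kk]
       = map (\<lambda>i. (fst (pos s V (\<beta>!i)), card {p'\<in>set (map (pos s V) \<beta>). phi m p' < phi m (pos s V (\<beta>!i))})) [0..<kk]"
  proof (rule map_cong[OF refl])
    fix i assume i: "i \<in> set [0..<kk]"
    hence ik: "i < kk" by simp
    have fst1: "fst (pull s \<beta>) i = fst (pos s V (\<beta>!i))" using ik bl by (simp add: pull_def pos_def sfr)
    have "{p'\<in>set (map (pos s V) \<beta>). phi m p' < phi m (pos s V (\<beta>!i))}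
        = (\<lambda>i'. pos s V (\<beta>!i')) ` {i'. i' < kk \<and> lexless (pull s \<beta>) i' i}"
    proof (intro equalityI subsetI)
      fix p assume "p \<in> {p'\<in>set (map (pos s V) \<beta>). phi m p' < phi m (pos s V (\<beta>!i))}"
      then obtain i' where i': "i' < kk" "p = pos s V (\<beta>!i')" "phi m p < phi m (pos s V (\<beta>!i))"
        using bl by (auto simp: in_set_conv_nth)
      hence "f (\<beta>!i') < f (\<beta>!i) \<or> (f (\<beta>!i') = f (\<beta>!i) \<and> (\<beta>!i', \<beta>!i) \<in> r \<and> \<beta>!i' \<noteq> \<beta>!i)"
        using phi_pos[OF s[unfolded sfr] fV m inV[OF i'(1)] inV[OF ik]] sfr by simp
      hence "lexless (pull s \<beta>) i' i" using i' ik bl by (auto simp: lexless_def pull_def sfr)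
      thus "p \<in> (\<lambda>i'. pos s V (\<beta>!i')) ` {i'. i' < kk \<and> lexless (pull s \<beta>) i' i}" using i' by blast
    next
      fix p assume "p \<in> (\<lambda>i'. pos s V (\<beta>!i')) ` {i'. i' < kk \<and> lexless (pull s \<beta>) i' i}"
      then obtain i' where i': "i' < kk" "p = pos s V (\<beta>!i')" "lexless (pull s \<beta>) i' i" by blast
      hence "f (\<beta>!i') < f (\<beta>!i) \<or> (f (\<beta>!i') = f (\<beta>!i) \<and> (\<beta>!i', \<beta>!i) \<in> r \<and> \<beta>!i' \<noteq> \<beta>!i)"
        using ik i'(1) bl by (auto simp: lexless_def pull_def sfr nth_eq_iff_index_eq)
      hence "phi m p < phi m (pos s V (\<beta>!i))"
        using phi_pos[OF s[unfolded sfr] fV m inV[OF i'(1)] inV[OF ik]] sfr i' by simp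
      moreover have "p \<in> set (map (pos s V) \<beta>)" using i' bl by auto
      ultimately show "p \<in> {p'\<in>set (map (pos s V) \<beta>). phi m p' < phi m (pos s V (\<beta>!i))}" by blast
    qed
    moreover have "inj_on (\<lambda>i'. pos s V (\<beta>!i')) {i'. i' < kk \<and> lexless (pull s \<beta>) i' i}"
    proof (rule inj_onI)
      fix i1 i2 assume "i1 \<in> {i'. i' < kk \<and> lexless (pull s \<beta>) i' i}" "i2 \<in> {i'. i' < kk \<and> lexless (pull s \<beta>) i' i}"
        "pos s V (\<beta>!i1) = pos s V (\<beta>!i2)"
      hence "i1 < kk" "i2 < kk" "pos s V (\<beta>!i1) = pos s V (\<beta>!i2)" by auto
      hence "\<beta>!i1 = \<beta>!i2" using inj_onD[OF pinj] inV by blast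
      thus "i1 = i2" using \<open>i1 < kk\<close> \<open>i2 < kk\<close> bl by (simp add: nth_eq_iff_index_eq)
    qed
    ultimately have "card {p'\<in>set (map (pos s V) \<beta>). phi m p' < phi m (pos s V (\<beta>!i))}
        = card {i'. i' < kk \<and> lexless (pull s \<beta>) i' i}" by (simp add: card_image)
    thus "(fst (pull s \<beta>) i, card {i'. i' < kk \<and> lexless (pull s \<beta>) i' i})
        = (fst (pos s V (\<beta>!i)), card {p'\<in>set (map (pos s V) \<beta>). phi m p' < phi m (pos s V (\<beta>!i))})"
      using fst1 by simp
  qed
  also have "\<dots> = cd m (map (pos s V) \<beta>)"
    unfolding cd_def by (subst (3) eq) (simp add: comp_def)
  finally show ?thesis by (simp add: code_def)
qed

lemma RAM:
  assumes GRp: "\<forall>P\<in>L. \<forall>ps. length ps = k P \<longrightarrow> distinct ps \<longrightarrow> set ps \<subseteq> {1..l}\<times>{0..<m} \<longrightarrow>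
        (map (\<lambda>p. a (fst p, e (phi m p))) ps \<in> R P \<longleftrightarrow> b P (cd m ps))"
    and s: "s \<in> split_orders l (verts F)" and fV: "finite (verts F)" and m: "card (verts F) \<le> m"
    and unif: "uniform L k (J F) Q s"
    and Qd: "\<forall>P\<in>L. Q P = {\<sigma> \<in> split_orders l {0..<k P}. b P (code (k P) \<sigma>)}"
  shows "\<forall>P\<in>L. \<forall>\<beta>\<in>inj_tuples (verts F) (k P).
     \<beta> \<in> rels F P \<longleftrightarrow> map (\<lambda>x. a (fst s x, e (phi m (pos s (verts F) x)))) \<beta> \<in> R P"
proof (intro ballI)
  fix P \<beta> assume P: "P \<in> L" and b: "\<beta> \<in> inj_tuples (verts F) (k P)"
  let ?V = "verts F"
  have bl: "length \<beta> = k P" "distinct \<beta>" "set \<beta> \<subseteq> ?V" using b by (auto simp: inj_tuples_def)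
  have "\<beta> \<in> rels F P \<longleftrightarrow> pull s \<beta> \<in> Q P" using unif P b by (auto simp: uniform_def J_def)
  also have "\<dots> \<longleftrightarrow> b P (code (k P) (pull s \<beta>))" using Qd P pull_split[OF s b] by simp
  also have "\<dots> \<longleftrightarrow> b P (cd m (map (pos s ?V) \<beta>))" using code_cd[OF s fV m b] by simp
  also have "\<dots> \<longleftrightarrow> map (\<lambda>p. a (fst p, e (phi m p))) (map (pos s ?V) \<beta>) \<in> R P"
  proof -
    have pinj: "inj_on (pos s ?V) ?V"
      using pos_phi_inj[OF s fV m] unfolding inj_on_def by fastforce
    have d: "distinct (map (pos s ?V) \<beta>)" using bl pinj by (simp add: distinct_map inj_on_subset)
    have st: "set (map (pos s ?V) \<beta>) \<subseteq> {1..l}\<times>{0..<m}"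
      using bl(3) pos_range[OF s fV m] by (simp only: set_map image_subset_iff) blast
    have len': "length (map (pos s ?V) \<beta>) = k P" using bl by simp
    show ?thesis using GRp[rule_format, OF P len' d st] by blast
  qed
  also have "\<dots> \<longleftrightarrow> map (\<lambda>x. a (fst s x, e (phi m (pos s ?V x)))) \<beta> \<in> R P"
    by (simp add: comp_def pos_def)
  finally show "\<beta> \<in> rels F P \<longleftrightarrow> map (\<lambda>x. a (fst s x, e (phi m (pos s ?V x)))) \<beta> \<in> R P" .
qed



definition mkN :: "'p set \<Rightarrow> ('p \<Rightarrow> nat) \<Rightarrow> nat \<Rightarrow> ('p \<Rightarrow> ((nat \<Rightarrow> nat) \<times> (nat \<times> nat) set) set)
   \<Rightarrow> (nat \<Rightarrow> nat) \<times> (nat \<times> nat) set \<Rightarrow> (nat \<times> nat) set \<Rightarrow> (nat, 'p) gstr" where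
  "mkN L k n Q sN EN = \<lparr>verts = {0..<n},
     rels = (\<lambda>P. if P \<in> L then {\<alpha>\<in>inj_tuples {0..<n} (k P). pull sN \<alpha> \<in> Q P} else {}), edges = EN\<rparr>"

definition trsp :: "(nat \<Rightarrow> nat) \<times> (nat \<times> nat) set \<Rightarrow> 'v set \<Rightarrow> ('v \<Rightarrow> nat)
   \<Rightarrow> ('v \<Rightarrow> nat) \<times> ('v \<times> 'v) set" where
  "trsp sN V \<psi> = ((\<lambda>x. if x \<in> V then fst sN (\<psi> x) else 0), {(x, y). x \<in> V \<and> y \<in> V \<and> (\<psi> x, \<psi> y) \<in> snd sN})"

lemma trsp_split:
  assumes sN: "sN \<in> split_orders l U0" and WU: "W \<subseteq> U0" and bij: "bij_betw \<psi> V W"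
  shows "trsp sN V \<psi> \<in> split_orders l V"
proof -
  obtain f r where sfr: "sN = (f, r)" by fastforce
  note D = split_ordersD[OF sN[unfolded sfr]]
  have inU: "\<And>x. x \<in> V \<Longrightarrow> \<psi> x \<in> U0" using bij WU by (auto simp: bij_betw_def)
  have inj: "\<And>x y. x \<in> V \<Longrightarrow> y \<in> V \<Longrightarrow> \<psi> x = \<psi> y \<Longrightarrow> x = y" using bij by (auto simp: bij_betw_def inj_on_def)
  define f' where "f' = (\<lambda>x. if x \<in> V then f (\<psi> x) else 0)"
  define r' where "r' = {(x, y). x \<in> V \<and> y \<in> V \<and> (\<psi> x, \<psi> y) \<in> r}"
  have pe: "trsp sN V \<psi> = (f', r')" unfolding trsp_def sfr f'_def r'_def fst_conv snd_conv ..
  have 1: "\<forall>v\<in>V. f' v \<in> {1..l}" using D(1) inU by (simp add: f'_def)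
  have 2: "\<forall>v. v \<notin> V \<longrightarrow> f' v = 0" by (simp add: f'_def)
  have 3: "r' \<subseteq> V \<times> V" by (auto simp: r'_def)
  have 4: "refl_on V r'" using D(4) inU 3 by (auto simp: refl_on_def r'_def)
  have 5: "trans r'" using D(5) unfolding trans_def r'_def by blast
  have 6: "antisym r'" using D(6) inj unfolding antisym_def r'_def by blast
  have 7: "\<forall>v\<in>V. \<forall>w\<in>V. ((v, w) \<in> r' \<or> (w, v) \<in> r') \<longleftrightarrow> f' v = f' w"
    using D(7) inU by (simp add: r'_def f'_def)
  show ?thesis unfolding pe split_orders_def mem_Collect_eq case_prod_conv using 1 2 3 4 5 6 7 by blast
qed

lemma trsp_pull:
  assumes "set \<beta> \<subseteq> V"
  shows "pull (trsp sN V \<psi>) \<beta> = pull sN (map \<psi> \<beta>)"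
  unfolding pull_def trsp_def fst_conv snd_conv
  using assms by (auto simp: fun_eq_iff intro: nth_mem)

lemma CONS:
  fixes Fam :: "('v, 'p) gstr set"
  assumes sN: "sN \<in> split_orders l {0..<n}"
    and QP: "Q \<in> ramsey_patterns l L k"
    and EN: "EN \<subseteq> {0..<n} \<times> {0..<n}" "sym EN" "irrefl EN"
    and bad: "\<not> (\<exists>F\<in>Fam. \<exists>s\<in>split_orders l (verts F). uniform L k (J F) Q s \<and>
                 (\<forall>(x, y)\<in>edges F. \<exists>i j. (i, j) \<in> EN \<and> fst s x = fst sN i \<and> fst s y = fst sN j))"
  shows "mkN L k n Q sN EN \<in> forb_models L k (up_E L k Fam)"
proof -
  let ?N = "mkN L k n Q sN EN"
  have Nm: "is_model L k ?N" using EN by (auto simp: is_model_def mkN_def)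
  have "\<forall>W \<subseteq> verts ?N. \<forall>G\<in>up_E L k Fam. \<not> iso (induced ?N W) G"
  proof (intro allI impI ballI notI)
    fix W G assume W: "W \<subseteq> verts ?N" and G: "G \<in> up_E L k Fam" and iso: "iso (induced ?N W) G"
    obtain F where F: "F \<in> Fam" "verts G = verts F" "edges F \<subseteq> edges G" "\<forall>P\<in>L. rels G P = rels F P"
      using G by (auto simp: up_E_def)
    obtain \<phi> where \<phi>: "bij_betw \<phi> W (verts G)"
      "edges G = (\<lambda>(x, y). (\<phi> x, \<phi> y)) ` (EN \<inter> W \<times> W)"
      "\<forall>P. rels G P = map \<phi> ` {\<alpha>\<in>rels ?N P. set \<alpha> \<subseteq> W}"
      using iso by (auto simp: iso_def induced_def mkN_def)
    define V where "V = verts F"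
    define \<psi> where "\<psi> = inv_into W \<phi>"
    have bphi: "bij_betw \<phi> W V" using \<phi>(1) F(2) V_def by simp
    have bpsi: "bij_betw \<psi> V W" using bij_betw_inv_into[OF bphi] \<psi>_def by simp
    have psiphi: "\<And>i. i \<in> W \<Longrightarrow> \<psi> (\<phi> i) = i" using bphi \<psi>_def by (simp add: bij_betw_def)
    have phipsi: "\<And>x. x \<in> V \<Longrightarrow> \<phi> (\<psi> x) = x" using bphi \<psi>_def
      by (meson bij_betw_inv_into_right)
    have psiW: "\<And>x. x \<in> V \<Longrightarrow> \<psi> x \<in> W" using bpsi by (auto simp: bij_betw_def)
    have phiV: "\<And>i. i \<in> W \<Longrightarrow> \<phi> i \<in> V" using bphi by (auto simp: bij_betw_def)
    have Wn: "W \<subseteq> {0..<n}" using W by (simp add: mkN_def)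
    define s where "s = trsp sN V \<psi>"
    have s: "s \<in> split_orders l V" unfolding s_def by (rule trsp_split[OF sN Wn bpsi])
    have unif: "uniform L k (J F) Q s"
      unfolding uniform_def J_def
    proof (simp, intro ballI)
      fix P assume P: "P \<in> L"
      have "rels F P = map \<phi> ` {\<alpha>\<in>rels ?N P. set \<alpha> \<subseteq> W}" using F(4) \<phi>(3) P by simp
      also have "\<dots> = map \<phi> ` {\<alpha>\<in>inj_tuples W (k P). pull sN \<alpha> \<in> Q P}"
        using P Wn by (auto simp: mkN_def inj_tuples_def)
      also have "\<dots> = {\<beta>\<in>inj_tuples V (k P). pull s \<beta> \<in> Q P}"
      proof (intro equalityI subsetI)
        fix \<beta> assume "\<beta> \<in> map \<phi> ` {\<alpha>\<in>inj_tuples W (k P). pull sN \<alpha> \<in> Q P}"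
        then obtain \<alpha> where a: "\<beta> = map \<phi> \<alpha>" "\<alpha> \<in> inj_tuples W (k P)" "pull sN \<alpha> \<in> Q P" by blast
        have al: "length \<alpha> = k P" "distinct \<alpha>" "set \<alpha> \<subseteq> W" using a by (auto simp: inj_tuples_def)
        have "map \<psi> \<beta> = \<alpha>" using a(1) al psiphi by (auto simp: map_idI subset_iff)
        moreover have "distinct \<beta>" using a(1) al bphi
          by (auto simp: distinct_map bij_betw_def intro: inj_on_subset)
        moreover have "set \<beta> \<subseteq> V" using a(1) al phiV by auto
        ultimately show "\<beta> \<in> {\<beta>\<in>inj_tuples V (k P). pull s \<beta> \<in> Q P}"
          using a al trsp_pull[of \<beta> V sN \<psi>] by (simp add: inj_tuples_def s_def)
      next
        fix \<beta> assume b: "\<beta> \<in> {\<beta>\<in>inj_tuples V (k P). pull s \<beta> \<in> Q P}"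
        have bl: "length \<beta> = k P" "distinct \<beta>" "set \<beta> \<subseteq> V" using b by (auto simp: inj_tuples_def)
        have "map \<phi> (map \<psi> \<beta>) = \<beta>" using bl phipsi by (auto simp: map_idI subset_iff)
        moreover have "distinct (map \<psi> \<beta>)" using bl bpsi
          by (auto simp: distinct_map bij_betw_def intro: inj_on_subset)
        moreover have "set (map \<psi> \<beta>) \<subseteq> W" using bl psiW by auto
        moreover have "pull sN (map \<psi> \<beta>) \<in> Q P" using b bl trsp_pull[of \<beta> V sN \<psi>] by (simp add: s_def)
        ultimately show "\<beta> \<in> map \<phi> ` {\<alpha>\<in>inj_tuples W (k P). pull sN \<alpha> \<in> Q P}"
          using bl by (auto simp: inj_tuples_def intro!: image_eqI[of _ _ "map \<psi> \<beta>"])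
      qed
      finally show "rels F P = {\<beta>\<in>inj_tuples (verts F) (k P). pull s \<beta> \<in> Q P}" by (simp add: V_def)
    qed
    have edg: "\<forall>(x, y)\<in>edges F. \<exists>i j. (i, j) \<in> EN \<and> fst s x = fst sN i \<and> fst s y = fst sN j"
    proof (intro ballI, clarify)
      fix x y assume "(x, y) \<in> edges F"
      hence "(x, y) \<in> edges G" using F(3) by blast
      then obtain i j where ij: "(i, j) \<in> EN" "i \<in> W" "j \<in> W" "x = \<phi> i" "y = \<phi> j" using \<phi>(2) by auto
      have "fst s x = fst sN i" "fst s y = fst sN j" using ij phiV psiphi by (auto simp: s_def trsp_def)
      thus "\<exists>i j. (i, j) \<in> EN \<and> fst s x = fst sN i \<and> fst s y = fst sN j" using ij by blast
    qed
    show False using bad F(1) s unif edg V_def by blast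
  qed
  thus ?thesis using Nm by (simp add: forb_models_def)
qed



lemma finite_split_orders:
  assumes "finite A"
  shows "finite (split_orders l A)"
proof -
  have "split_orders l A \<subseteq> (\<lambda>(g, r). ((\<lambda>x. if x \<in> A then g x else 0), r)) ` ((PiE A (\<lambda>_. {1..l})) \<times> Pow (A \<times> A))"
  proof
    fix s assume s: "s \<in> split_orders l A"
    obtain f r where sfr: "s = (f, r)" by fastforce
    note D = split_ordersD[OF s[unfolded sfr]]
    have "(restrict f A, r) \<in> (PiE A (\<lambda>_. {1..l})) \<times> Pow (A \<times> A)" using D(1,3) by auto
    moreover have "s = (\<lambda>(g, r). ((\<lambda>x. if x \<in> A then g x else 0), r)) (restrict f A, r)"
      using D(2) sfr by (auto simp: fun_eq_iff)
    ultimately show "s \<in> (\<lambda>(g, r). ((\<lambda>x. if x \<in> A then g x else 0), r)) ` ((PiE A (\<lambda>_. {1..l})) \<times> Pow (A \<times> A))"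
      by blast
  qed
  moreover have "finite ((PiE A (\<lambda>_. {1..l})) \<times> Pow (A \<times> A))" using assms by (simp add: finite_PiE)
  ultimately show ?thesis using finite_subset by blast
qed

lemma finite_ramsey_patterns:
  assumes "finite L"
  shows "finite (ramsey_patterns l L k)"
proof -
  have "ramsey_patterns l L k \<subseteq> (\<lambda>g P. if P \<in> L then g P else {}) ` PiE L (\<lambda>P. Pow (split_orders l {0..<k P}))"
  proof
    fix Q assume Q: "Q \<in> ramsey_patterns l L k"
    have "restrict Q L \<in> PiE L (\<lambda>P. Pow (split_orders l {0..<k P}))" using Q by (auto simp: ramsey_patterns_def)
    moreover have "Q = (\<lambda>g P. if P \<in> L then g P else {}) (restrict Q L)" using Q by (auto simp: ramsey_patterns_def fun_eq_iff)
    ultimately show "Q \<in> (\<lambda>g P. if P \<in> L then g P else {}) ` PiE L (\<lambda>P. Pow (split_orders l {0..<k P}))" by blast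
  qed
  moreover have "finite (PiE L (\<lambda>P. Pow (split_orders l {0..<k P})))"
    using assms by (intro finite_PiE) (auto intro: finite_split_orders)
  ultimately show ?thesis using finite_subset by blast
qed

definition good :: "'p set \<Rightarrow> ('p \<Rightarrow> nat) \<Rightarrow> ('v, 'p) gstr set \<Rightarrow> nat \<Rightarrow> bool" where
  "good L k Fam l \<longleftrightarrow> (\<forall>n. \<exists>N\<in>forb_models L k (up_E L k Fam).
        card (verts N) = n \<and> contains_partite n l (edges N) (verts N))"

lemma Clem:
  fixes Fam :: "('v, 'p) gstr set"
  assumes l1: "1 \<le> l" and Q: "Q \<in> ramsey_patterns l L k" and nQ: "Q \<notin> chiE_fam l L k Fam"
  shows "good L k Fam l"
  unfolding good_def
proof
  fix n :: nat
  define sN where "sN = ((\<lambda>i. if i < n then i mod l + 1 else 0), {(i, j). i < n \<and> j < n \<and> i mod l = j mod l \<and> i \<le> j})"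
  define EN where "EN = {(i, j). i < n \<and> j < n \<and> i mod l \<noteq> j mod l}"
  have sN: "sN \<in> split_orders l {0..<n}"
    unfolding split_orders_def sN_def using l1
    by (auto simp: refl_on_def trans_def antisym_def Suc_le_eq)
  have EN: "EN \<subseteq> {0..<n} \<times> {0..<n}" "sym EN" "irrefl EN"
    by (auto simp: EN_def sym_def irrefl_def)
  have bad: "\<not> (\<exists>F\<in>Fam. \<exists>s\<in>split_orders l (verts F). uniform L k (J F) Q s \<and>
                 (\<forall>(x, y)\<in>edges F. \<exists>i j. (i, j) \<in> EN \<and> fst s x = fst sN i \<and> fst s y = fst sN j))"
  proof
    assume "\<exists>F\<in>Fam. \<exists>s\<in>split_orders l (verts F). uniform L k (J F) Q s \<and>
                 (\<forall>(x, y)\<in>edges F. \<exists>i j. (i, j) \<in> EN \<and> fst s x = fst sN i \<and> fst s y = fst sN j)"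
    then obtain F s where F: "F \<in> Fam" "s \<in> split_orders l (verts F)" "uniform L k (J F) Q s"
      and e: "\<forall>(x, y)\<in>edges F. \<exists>i j. (i, j) \<in> EN \<and> fst s x = fst sN i \<and> fst s y = fst sN j" by blast
    have "\<forall>(x, y)\<in>edges F. fst s x \<noteq> fst s y"
    proof (intro ballI, clarify)
      fix x y assume "(x, y) \<in> edges F" "fst s x = fst s y"
      then obtain i j where "(i, j) \<in> EN" "fst s x = fst sN i" "fst s y = fst sN j" using e by blast
      thus False using \<open>fst s x = fst s y\<close> by (auto simp: EN_def sN_def)
    qed
    hence "Q \<in> chiE l L k F" using Q F by (auto simp: chiE_def)
    thus False using nQ F by (auto simp: chiE_fam_def)
  qed
  have N: "mkN L k n Q sN EN \<in> forb_models L k (up_E L k Fam)" by (rule CONS[OF sN Q EN bad])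
  have "contains_partite n l EN {0..<n}" unfolding contains_partite_def
    by (intro exI[of _ id]) (auto simp: EN_def)
  thus "\<exists>N\<in>forb_models L k (up_E L k Fam). card (verts N) = n \<and> contains_partite n l (edges N) (verts N)"
    using N by (intro bexI[of _ "mkN L k n Q sN EN"]) (auto simp: mkN_def)
qed

lemma C1lem:
  fixes Fam :: "('v, 'p) gstr set"
  assumes Q: "Q \<in> ramsey_patterns 1 L k" and nQ: "Q \<notin> U_fam 1 L k (J ` Fam)"
  shows "good L k Fam l"
  unfolding good_def
proof
  fix n :: nat
  define sN where "sN = ((\<lambda>i. if i < n then (1::nat) else 0), {(i, j). i < n \<and> j < n \<and> i \<le> j})"
  define EN where "EN = {(i, j). i < n \<and> j < n \<and> i \<noteq> j}"
  have sN: "sN \<in> split_orders 1 {0..<n}"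
    unfolding split_orders_def sN_def
    by (auto simp: refl_on_def trans_def antisym_def)
  have EN: "EN \<subseteq> {0..<n} \<times> {0..<n}" "sym EN" "irrefl EN"
    by (auto simp: EN_def sym_def irrefl_def)
  have bad: "\<not> (\<exists>F\<in>Fam. \<exists>s\<in>split_orders 1 (verts F). uniform L k (J F) Q s \<and>
                 (\<forall>(x, y)\<in>edges F. \<exists>i j. (i, j) \<in> EN \<and> fst s x = fst sN i \<and> fst s y = fst sN j))"
  proof
    assume "\<exists>F\<in>Fam. \<exists>s\<in>split_orders 1 (verts F). uniform L k (J F) Q s \<and>
                 (\<forall>(x, y)\<in>edges F. \<exists>i j. (i, j) \<in> EN \<and> fst s x = fst sN i \<and> fst s y = fst sN j)"
    then obtain F s where F: "F \<in> Fam" "s \<in> split_orders 1 (verts F)" "uniform L k (J F) Q s" by blast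
    have "Q \<in> U 1 L k (J F)" using Q F by (auto simp: U_def J_def)
    thus False using nQ F by (auto simp: U_fam_def)
  qed
  have N: "mkN L k n Q sN EN \<in> forb_models L k (up_E L k Fam)" by (rule CONS[OF sN Q EN bad])
  have "contains_partite n l EN {0..<n}" unfolding contains_partite_def
    by (intro exI[of _ id]) (auto simp: EN_def)
  thus "\<exists>N\<in>forb_models L k (up_E L k Fam). card (verts N) = n \<and> contains_partite n l (edges N) (verts N)"
    using N by (intro bexI[of _ "mkN L k n Q sN EN"]) (auto simp: mkN_def)
qed



lemma tx_props:
  assumes s: "s \<in> split_orders l V" and fV: "finite V" and m: "card V \<le> m"
    and emono: "\<forall>i j. i < j \<longrightarrow> j < l*m \<longrightarrow> e i < e j" and elt: "\<forall>i<l*m. e i < (M::nat)"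
  shows "inj_on (\<lambda>x. e (phi m (pos s V x))) V" "\<forall>x\<in>V. e (phi m (pos s V x)) < M"
    "\<forall>x\<in>V. fst s x \<in> {1..l}"
proof -
  have lt: "\<And>x. x \<in> V \<Longrightarrow> phi m (pos s V x) < l*m" by (rule phi_lt[OF pos_range[OF s fV m]])
  have einj: "\<And>i j. i < l*m \<Longrightarrow> j < l*m \<Longrightarrow> e i = e j \<Longrightarrow> i = j"
  proof (rule ccontr)
    fix i j assume ij: "i < l*m" "j < l*m" "e i = e j" "i \<noteq> j"
    show False
    proof (cases "i < j")
      case True thus False using emono ij by (metis less_irrefl)
    next
      case False hence "j < i" using ij by simp
      thus False using emono ij by (metis less_irrefl)
    qed
  qed
  show "inj_on (\<lambda>x. e (phi m (pos s V x))) V"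
  proof (rule inj_onI)
    fix x y assume "x \<in> V" "y \<in> V" "e (phi m (pos s V x)) = e (phi m (pos s V y))"
    hence "phi m (pos s V x) = phi m (pos s V y)" using einj lt by blast
    thus "x = y" using inj_onD[OF pos_phi_inj[OF s fV m]] \<open>x \<in> V\<close> \<open>y \<in> V\<close> by blast
  qed
  show "\<forall>x\<in>V. e (phi m (pos s V x)) < M" using lt elt by blast
  show "\<forall>x\<in>V. fst s x \<in> {1..l}"
  proof -
    obtain f r where sfr: "s = (f, r)" by fastforce
    show ?thesis using split_ordersD(1)[OF s[unfolded sfr]] sfr by simp
  qed
qed

lemma idx_lt:
  fixes t c l' M :: nat
  assumes "c < l'" "t < M"
  shows "t * l' + c < l' * M"
proof -
  have "t * l' + c < t * l' + l'" using assms by simp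
  also have "\<dots> = Suc t * l'" by simp
  also have "\<dots> \<le> M * l'" using assms(2) by (intro mult_le_mono1) simp
  finally show ?thesis by (simp add: mult.commute)
qed

lemma idx_mod: "c < (l'::nat) \<Longrightarrow> (t * l' + c) mod l' = c" by simp
lemma idx_div: "c < (l'::nat) \<Longrightarrow> (t * l' + c) div l' = t" by simp

lemma sel_fun:
  assumes "\<forall>Q\<in>S. \<exists>F\<in>Fam. P Q F"
  obtains Fs where "\<forall>Q\<in>S. Fs Q \<in> Fam \<and> P Q (Fs Q)"
proof -
  have "\<forall>Q\<in>S. \<exists>F. F \<in> Fam \<and> P Q F" using assms by blast
  then obtain Fs where "\<forall>Q\<in>S. Fs Q \<in> Fam \<and> P Q (Fs Q)" by (rule bchoice[THEN exE])
  thus ?thesis using that by blast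
qed

lemma Rlem:
  fixes Fam :: "('v, 'p) gstr set"
  assumes fin: "finite L" and models: "\<forall>F\<in>Fam. is_model L k F" and l1: "1 \<le> l"
    and A: "ramsey_patterns l L k \<subseteq> chiE_fam l L k Fam" and ll: "l \<le> l'"
  shows "\<not> good L k Fam l'"
proof
  assume G: "good L k Fam l'"
  let ?P = "ramsey_patterns l L k"
  have "\<forall>Q\<in>?P. \<exists>F\<in>Fam. Q \<in> chiE l L k F" using A by (auto simp: chiE_fam_def)
  then obtain Fs where Fs: "\<forall>Q\<in>?P. Fs Q \<in> Fam \<and> Q \<in> chiE l L k (Fs Q)" by (rule sel_fun)
  define m where "m = (\<Sum>Q\<in>?P. card (verts (Fs Q)))"
  have finP: "finite ?P" using finite_ramsey_patterns[OF fin] .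
  define M where "M = (SOME M. \<forall>(a :: nat \<times> nat \<Rightarrow> nat) (R :: 'p \<Rightarrow> nat list set). \<exists>e b.
     (\<forall>i<l*m. e i < M) \<and> (\<forall>i j. i < j \<longrightarrow> j < l*m \<longrightarrow> e i < e j) \<and>
     (\<forall>P\<in>L. \<forall>ps. length ps = k P \<longrightarrow> distinct ps \<longrightarrow> set ps \<subseteq> {1..l}\<times>{0..<m} \<longrightarrow>
        (map (\<lambda>p. a (fst p, e (phi m p))) ps \<in> R P \<longleftrightarrow> b P (cd m ps))))"
  have M: "\<forall>(a :: nat \<times> nat \<Rightarrow> nat) (R :: 'p \<Rightarrow> nat list set). \<exists>e b.
     (\<forall>i<l*m. e i < M) \<and> (\<forall>i j. i < j \<longrightarrow> j < l*m \<longrightarrow> e i < e j) \<and>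
     (\<forall>P\<in>L. \<forall>ps. length ps = k P \<longrightarrow> distinct ps \<longrightarrow> set ps \<subseteq> {1..l}\<times>{0..<m} \<longrightarrow>
        (map (\<lambda>p. a (fst p, e (phi m p))) ps \<in> R P \<longleftrightarrow> b P (cd m ps)))"
    unfolding M_def by (rule someI_ex[OF GR[OF fin, of l m]])
  define n where "n = l' * M"
  obtain N where N: "N \<in> forb_models L k (up_E L k Fam)" "card (verts N) = n"
    "contains_partite n l' (edges N) (verts N)"
    using G[unfolded good_def, rule_format, of n] by blast
  obtain g where g: "inj_on g {0..<n}" "g ` {0..<n} \<subseteq> verts N"
    "\<forall>i<n. \<forall>j<n. i mod l' \<noteq> j mod l' \<longrightarrow> (g i, g j) \<in> edges N"
    using N(3) unfolding contains_partite_def by blast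
  define a where "a = (\<lambda>(jt :: nat \<times> nat). g (snd jt * l' + (fst jt - 1)))"
  obtain e b where eb: "\<forall>i<l*m. e i < M" "\<forall>i j. i < j \<longrightarrow> j < l*m \<longrightarrow> e i < e j"
     "\<forall>P\<in>L. \<forall>ps. length ps = k P \<longrightarrow> distinct ps \<longrightarrow> set ps \<subseteq> {1..l}\<times>{0..<m} \<longrightarrow>
        (map (\<lambda>p. a (fst p, e (phi m p))) ps \<in> rels N P \<longleftrightarrow> b P (cd m ps))"
    using M[rule_format, of a "rels N"] by blast
  define Q where "Q = (\<lambda>P. if P \<in> L then {\<sigma> \<in> split_orders l {0..<k P}. b P (code (k P) \<sigma>)} else {})"
  have QP: "Q \<in> ?P" by (auto simp: Q_def ramsey_patterns_def)
  define F where "F = Fs Q"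
  have FF: "F \<in> Fam" and QF: "Q \<in> chiE l L k F" using Fs QP F_def by auto
  obtain s where s: "s \<in> split_orders l (verts F)" "uniform L k (J F) Q s"
    "\<forall>(x, y)\<in>edges F. fst s x \<noteq> fst s y"
    using QF by (auto simp: chiE_def)
  have Fm: "is_model L k F" using models FF by blast
  have fV: "finite (verts F)" using Fm by (simp add: is_model_def)
  have Fe: "edges F \<subseteq> verts F \<times> verts F" using Fm by (simp add: is_model_def)
  have cm: "card (verts F) \<le> m" unfolding m_def F_def
    using member_le_sum[OF QP, of "\<lambda>Q. card (verts (Fs Q))"] finP by simp
  have Qd: "\<forall>P\<in>L. Q P = {\<sigma> \<in> split_orders l {0..<k P}. b P (code (k P) \<sigma>)}" by (simp add: Q_def)
  define t where "t = (\<lambda>x. e (phi m (pos s (verts F) x)))"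
  have rel: "\<forall>P\<in>L. \<forall>\<beta>\<in>inj_tuples (verts F) (k P).
     \<beta> \<in> rels F P \<longleftrightarrow> map (\<lambda>x. a (fst s x, t x)) \<beta> \<in> rels N P"
    using RAM[OF eb(3) s(1) fV cm s(2) Qd] unfolding t_def .
  have tp1: "inj_on t (verts F)" using tx_props(1)[OF s(1) fV cm eb(2) eb(1)] unfolding t_def .
  have tp2: "\<forall>x\<in>verts F. t x < M" using tx_props(2)[OF s(1) fV cm eb(2) eb(1)] by (simp add: t_def)
  have tp3: "\<forall>x\<in>verts F. fst s x \<in> {1..l}" using tx_props(3)[OF s(1) fV cm eb(2) eb(1)] .
  define idx where "idx = (\<lambda>x. t x * l' + (fst s x - 1))"
  have h_eq: "(\<lambda>x. a (fst s x, t x)) = (\<lambda>x. g (idx x))" by (simp add: a_def idx_def fun_eq_iff)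
  have cl: "\<And>x. x \<in> verts F \<Longrightarrow> fst s x - 1 < l'"
  proof -
    fix x assume "x \<in> verts F"
    hence "fst s x \<in> {1..l}" using tp3 by blast
    hence "1 \<le> fst s x" "fst s x \<le> l" by simp_all
    thus "fst s x - 1 < l'" using ll by linarith
  qed
  have idxn: "\<And>x. x \<in> verts F \<Longrightarrow> idx x < n" unfolding idx_def n_def
  proof -
    fix x assume x: "x \<in> verts F"
    have "t x < M" using tp2 x by blast
    from idx_lt[OF cl[OF x] this] show "t x * l' + (fst s x - 1) < l' * M" .
  qed
  have idxmod: "\<And>x. x \<in> verts F \<Longrightarrow> idx x mod l' = fst s x - 1" unfolding idx_def using idx_mod[OF cl] by blast
  have idxdiv: "\<And>x. x \<in> verts F \<Longrightarrow> idx x div l' = t x" unfolding idx_def using idx_div[OF cl] by blast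
  have idxinj: "inj_on idx (verts F)"
  proof (rule inj_onI)
    fix x y assume xy: "x \<in> verts F" "y \<in> verts F" "idx x = idx y"
    hence "t x = t y" using idxdiv by metis
    thus "x = y" using inj_onD[OF tp1] xy by blast
  qed
  have hinj: "inj_on (\<lambda>x. g (idx x)) (verts F)"
  proof (rule inj_onI)
    fix x y assume xy: "x \<in> verts F" "y \<in> verts F" "g (idx x) = g (idx y)"
    hence "idx x = idx y" using inj_onD[OF g(1)] idxn by simp
    thus "x = y" using inj_onD[OF idxinj] xy by blast
  qed
  have him: "(\<lambda>x. g (idx x)) ` verts F \<subseteq> verts N" using g(2) idxn by auto
  have hedge: "\<forall>(x, y)\<in>edges F. ((\<lambda>x. g (idx x)) x, (\<lambda>x. g (idx x)) y) \<in> edges N"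
  proof (intro ballI, clarify)
    fix x y assume xy: "(x, y) \<in> edges F"
    hence xyV: "x \<in> verts F" "y \<in> verts F" using Fe by auto
    have "fst s x \<noteq> fst s y" using s(3) xy by auto
    moreover have "fst s x \<ge> 1" "fst s y \<ge> 1" using tp3 xyV by auto
    ultimately have "idx x mod l' \<noteq> idx y mod l'" using idxmod xyV by simp
    thus "(g (idx x), g (idx y)) \<in> edges N" using g(3) idxn xyV by blast
  qed
  have Nm: "is_model L k N" using N(1) by (simp add: forb_models_def)
  have "N \<notin> forb_models L k (up_E L k Fam)"
    by (rule EMB[OF Nm Fm FF hinj him _ hedge]) (use rel in \<open>unfold h_eq\<close>)
  thus False using N(1) by blast
qed

lemma R1lem:
  fixes Fam :: "('v, 'p) gstr set"
  assumes fin: "finite L" and models: "\<forall>F\<in>Fam. is_model L k F"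
    and A: "ramsey_patterns 1 L k \<subseteq> U_fam 1 L k (J ` Fam)"
  shows "\<exists>l'\<ge>1. \<not> good L k Fam l'"
proof -
  let ?P = "ramsey_patterns 1 L k"
  have "\<forall>Q\<in>?P. \<exists>F\<in>Fam. Q \<in> U 1 L k (J F)" using A by (auto simp: U_fam_def)
  then obtain Fs where Fs: "\<forall>Q\<in>?P. Fs Q \<in> Fam \<and> Q \<in> U 1 L k (J (Fs Q))" by (rule sel_fun)
  define m where "m = (\<Sum>Q\<in>?P. card (verts (Fs Q)))"
  have finP: "finite ?P" using finite_ramsey_patterns[OF fin] .
  define M where "M = (SOME M. \<forall>(a :: nat \<times> nat \<Rightarrow> nat) (R :: 'p \<Rightarrow> nat list set). \<exists>e b.
     (\<forall>i<1*m. e i < M) \<and> (\<forall>i j. i < j \<longrightarrow> j < 1*m \<longrightarrow> e i < e j) \<and>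
     (\<forall>P\<in>L. \<forall>ps. length ps = k P \<longrightarrow> distinct ps \<longrightarrow> set ps \<subseteq> {1..1}\<times>{0..<m} \<longrightarrow>
        (map (\<lambda>p. a (fst p, e (phi m p))) ps \<in> R P \<longleftrightarrow> b P (cd m ps))))"
  have M: "\<forall>(a :: nat \<times> nat \<Rightarrow> nat) (R :: 'p \<Rightarrow> nat list set). \<exists>e b.
     (\<forall>i<1*m. e i < M) \<and> (\<forall>i j. i < j \<longrightarrow> j < 1*m \<longrightarrow> e i < e j) \<and>
     (\<forall>P\<in>L. \<forall>ps. length ps = k P \<longrightarrow> distinct ps \<longrightarrow> set ps \<subseteq> {1..1}\<times>{0..<m} \<longrightarrow>
        (map (\<lambda>p. a (fst p, e (phi m p))) ps \<in> R P \<longleftrightarrow> b P (cd m ps)))"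
    unfolding M_def by (rule someI_ex[OF GR[OF fin, of 1 m]])
  define n where "n = max M 1"
  have "\<not> good L k Fam n"
  proof
    assume G: "good L k Fam n"
    obtain N where N: "N \<in> forb_models L k (up_E L k Fam)" "card (verts N) = n"
      "contains_partite n n (edges N) (verts N)"
      using G[unfolded good_def, rule_format, of n] by blast
    obtain g where g: "inj_on g {0..<n}" "g ` {0..<n} \<subseteq> verts N"
      "\<forall>i<n. \<forall>j<n. i mod n \<noteq> j mod n \<longrightarrow> (g i, g j) \<in> edges N"
      using N(3) unfolding contains_partite_def by blast
    define a where "a = (\<lambda>(jt :: nat \<times> nat). g (snd jt))"
    obtain e b where eb: "\<forall>i<1*m. e i < M" "\<forall>i j. i < j \<longrightarrow> j < 1*m \<longrightarrow> e i < e j"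
       "\<forall>P\<in>L. \<forall>ps. length ps = k P \<longrightarrow> distinct ps \<longrightarrow> set ps \<subseteq> {1..1}\<times>{0..<m} \<longrightarrow>
          (map (\<lambda>p. a (fst p, e (phi m p))) ps \<in> rels N P \<longleftrightarrow> b P (cd m ps))"
      using M[rule_format, of a "rels N"] by blast
    define Q where "Q = (\<lambda>P. if P \<in> L then {\<sigma> \<in> split_orders 1 {0..<k P}. b P (code (k P) \<sigma>)} else {})"
    have QP: "Q \<in> ?P" by (auto simp: Q_def ramsey_patterns_def)
    define F where "F = Fs Q"
    have FF: "F \<in> Fam" and QF: "Q \<in> U 1 L k (J F)" using Fs QP F_def by auto
    obtain s where s: "s \<in> split_orders 1 (verts F)" "uniform L k (J F) Q s"
      using QF by (auto simp: U_def J_def)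
    have Fm: "is_model L k F" using models FF by blast
    have fV: "finite (verts F)" using Fm by (simp add: is_model_def)
    have Fe: "edges F \<subseteq> verts F \<times> verts F" "irrefl (edges F)" using Fm by (simp_all add: is_model_def)
    have cm: "card (verts F) \<le> m" unfolding m_def F_def
      using member_le_sum[OF QP, of "\<lambda>Q. card (verts (Fs Q))"] finP by simp
    have Qd: "\<forall>P\<in>L. Q P = {\<sigma> \<in> split_orders 1 {0..<k P}. b P (code (k P) \<sigma>)}" by (simp add: Q_def)
    define t where "t = (\<lambda>x. e (phi m (pos s (verts F) x)))"
    have rel: "\<forall>P\<in>L. \<forall>\<beta>\<in>inj_tuples (verts F) (k P).
       \<beta> \<in> rels F P \<longleftrightarrow> map (\<lambda>x. a (fst s x, t x)) \<beta> \<in> rels N P"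
      using RAM[OF eb(3) s(1) fV cm s(2) Qd] unfolding t_def .
    have tp1: "inj_on t (verts F)" using tx_props(1)[OF s(1) fV cm eb(2) eb(1)] unfolding t_def .
    have tp2: "\<forall>x\<in>verts F. t x < M" using tx_props(2)[OF s(1) fV cm eb(2) eb(1)] by (simp add: t_def)
    have h_eq: "(\<lambda>x. a (fst s x, t x)) = (\<lambda>x. g (t x))" by (simp add: a_def fun_eq_iff)
    have tn: "\<And>x. x \<in> verts F \<Longrightarrow> t x < n" using tp2 n_def by fastforce
    have hinj: "inj_on (\<lambda>x. g (t x)) (verts F)"
    proof (rule inj_onI)
      fix x y assume xy: "x \<in> verts F" "y \<in> verts F" "g (t x) = g (t y)"
      hence "t x = t y" using inj_onD[OF g(1)] tn by simp
      thus "x = y" using inj_onD[OF tp1] xy by blast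
    qed
    have him: "(\<lambda>x. g (t x)) ` verts F \<subseteq> verts N" using g(2) tn by auto
    have hedge: "\<forall>(x, y)\<in>edges F. ((\<lambda>x. g (t x)) x, (\<lambda>x. g (t x)) y) \<in> edges N"
    proof (intro ballI, clarify)
      fix x y assume xy: "(x, y) \<in> edges F"
      hence xyV: "x \<in> verts F" "y \<in> verts F" using Fe by auto
      have "x \<noteq> y" using xy Fe(2) by (auto simp: irrefl_def)
      hence "t x \<noteq> t y" using inj_onD[OF tp1] xyV by blast
      hence "t x mod n \<noteq> t y mod n" using tn xyV by simp
      thus "(g (t x), g (t y)) \<in> edges N" using g(3) tn xyV by blast
    qed
    have Nm: "is_model L k N" using N(1) by (simp add: forb_models_def)
    have "N \<notin> forb_models L k (up_E L k Fam)"
      by (rule EMB[OF Nm Fm FF hinj him _ hedge]) (use rel in \<open>unfold h_eq\<close>)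
    thus False using N(1) by blast
  qed
  thus ?thesis using n_def by (intro exI[of _ n]) simp
qed



lemma Sup_enat_upto:
  assumes "1 \<le> (m::nat)"
  shows "Sup (enat ` {0..<m}) = enat (m - 1)"
proof (rule antisym)
  show "Sup (enat ` {0..<m}) \<le> enat (m - 1)"
    by (rule Sup_least) auto
  show "enat (m - 1) \<le> Sup (enat ` {0..<m})"
    by (rule Sup_upper) (use assms in auto)
qed

lemma Sup_enat_UNIV: "Sup (enat ` (UNIV :: nat set)) = \<infinity>"
proof -
  have "infinite (enat ` (UNIV :: nat set))" by (simp add: finite_image_iff inj_on_def)
  thus ?thesis by (simp add: Sup_enat_def)
qed

theorem theorem3p6:
  fixes L :: "'p set" and k :: "'p \<Rightarrow> nat" and Fam :: "('v, 'p) gstr set"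
  assumes "finite L"
    and "\<forall>F\<in>Fam. is_model L k F"
  shows "chi L k Fam = (INF l\<in>{l. l \<ge> 1 \<and> ramsey_patterns l L k \<subseteq> chiE_fam l L k Fam}. enat l)
     \<and> (chi L k Fam < \<infinity> \<longleftrightarrow> ramsey_patterns 1 L k \<subseteq> U_fam 1 L k (J ` Fam))"
proof -
  note fin = assms(1) and models = assms(2)
  define AS where "AS = {l. l \<ge> 1 \<and> ramsey_patterns l L k \<subseteq> chiE_fam l L k Fam}"
  have chi_eq: "chi L k Fam = Sup (enat ` ({l. l \<ge> 1 \<and> good L k Fam l} \<union> {0})) + 1"
    by (simp add: chi_def good_def)
  have C: "\<And>l. 1 \<le> l \<Longrightarrow> l \<notin> AS \<Longrightarrow> good L k Fam l"
  proof -
    fix l :: nat assume l: "1 \<le> l" "l \<notin> AS"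
    then obtain Q where "Q \<in> ramsey_patterns l L k" "Q \<notin> chiE_fam l L k Fam" by (auto simp: AS_def)
    thus "good L k Fam l" using Clem[OF l(1)] by blast
  qed
  have R: "\<And>l l'. l \<in> AS \<Longrightarrow> l \<le> l' \<Longrightarrow> \<not> good L k Fam l'"
    using Rlem[OF fin models] by (auto simp: AS_def)
  show ?thesis
  proof (cases "AS = {}")
    case False
    define m where "m = (LEAST l. l \<in> AS)"
    have mAS: "m \<in> AS" using False m_def by (metis LeastI ex_in_conv)
    have m1: "1 \<le> m" using mAS by (simp add: AS_def)
    have set_eq: "{l. l \<ge> 1 \<and> good L k Fam l} \<union> {0} = {0..<m}"
    proof (intro equalityI subsetI)
      fix l assume "l \<in> {l. l \<ge> 1 \<and> good L k Fam l} \<union> {0}"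
      hence "l = 0 \<or> (l \<ge> 1 \<and> good L k Fam l)" by blast
      thus "l \<in> {0..<m}"
      proof
        assume "l = 0" thus ?thesis using m1 by simp
      next
        assume h: "l \<ge> 1 \<and> good L k Fam l"
        have "\<not> m \<le> l" using R[OF mAS] h by blast
        thus ?thesis by simp
      qed
    next
      fix l assume "l \<in> {0..<m}"
      hence lm: "l < m" by simp
      show "l \<in> {l. l \<ge> 1 \<and> good L k Fam l} \<union> {0}"
      proof (cases "l = 0")
        case True thus ?thesis by simp
      next
        case False
        have "l \<notin> AS" using lm m_def not_less_Least by blast
        hence "good L k Fam l" using C False by simp
        thus ?thesis using False by simp
      qed
    qed
    have "chi L k Fam = Sup (enat ` {0..<m}) + 1" using chi_eq unfolding set_eq .
    also have "\<dots> = enat (m - 1) + 1" unfolding Sup_enat_upto[OF m1] ..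
    also have "\<dots> = enat m" using m1 by (simp add: one_enat_def)
    finally have chim: "chi L k Fam = enat m" .
    have inf: "(INF l\<in>AS. enat l) = enat m"
    proof (rule antisym)
      show "(INF l\<in>AS. enat l) \<le> enat m" by (rule INF_lower[OF mAS])
      show "enat m \<le> (INF l\<in>AS. enat l)"
        by (rule INF_greatest) (simp add: m_def Least_le)
    qed
    have "ramsey_patterns 1 L k \<subseteq> U_fam 1 L k (J ` Fam)"
    proof (rule ccontr)
      assume "\<not> ?thesis"
      then obtain Q where Q: "Q \<in> ramsey_patterns 1 L k" "Q \<notin> U_fam 1 L k (J ` Fam)" by blast
      have "good L k Fam m" using C1lem[OF Q] .
      thus False using R[OF mAS] by blast
    qed
    thus ?thesis using chim inf by (simp add: AS_def)
  next
    case True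
    have ue: "{l. l \<ge> 1 \<and> good L k Fam l} \<union> {0} = UNIV"
    proof (intro equalityI subsetI)
      fix l :: nat assume "l \<in> UNIV"
      show "l \<in> {l. l \<ge> 1 \<and> good L k Fam l} \<union> {0}"
      proof (cases "l = 0")
        case False thus ?thesis using C True by simp
      qed simp
    qed simp
    have "chi L k Fam = Sup (enat ` UNIV) + 1" using chi_eq unfolding ue .
    hence chinf: "chi L k Fam = \<infinity>" unfolding Sup_enat_UNIV by simp
    have inf: "(INF l\<in>AS. enat l) = \<infinity>" using True by (simp add: top_enat_def)
    have "\<not> ramsey_patterns 1 L k \<subseteq> U_fam 1 L k (J ` Fam)"
    proof
      assume "ramsey_patterns 1 L k \<subseteq> U_fam 1 L k (J ` Fam)"
      then obtain l' where "l' \<ge> 1" "\<not> good L k Fam l'" using R1lem[OF fin models] by blast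
      thus False using C True by simp
    qed
    thus ?thesis using chinf inf by (simp add: AS_def)
  qed
qed

end
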